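(* Let $k:[0,\infty)\to(0,\infty)$ satisfy conditions (C1)–(C3) below with some $\alpha\in(0,1)$ and slowly varying $L$, and let $a=-\int_0^\infty k(s)\,ds$. If $r$ is the unique continuous solution of $r'(t)=ar(t)+\int_0^tk(t-s)r(s)\,ds$, $r(0)=1$, then $$\lim_{t\to\infty}r(t)\,t^{1-\alpha}L(t)=\frac{\sin(\alpha\pi)}{\pi}.$$ In particular, for $\alpha\in(0,1/2)$, $r\in L^2([0,\infty))$ but $r\notin L^1([0,\infty))$.
   Context: Conditions: (C1) $k\in L^1([0,\infty);(0,\infty))\cap C([0,\infty);(0,\infty))$; (C2) $t\mapsto\log\lambda(t)$ is convex, where $\lambda(t):=\int_t^\infty k(s)\,ds$; (C3) $\lambda(t)=L(t)t^{-\alpha}$ with $\alpha\in(0,1)$ and $L$ slowly varying at infinity. A measurable $L:[0,\infty)\to(0,\infty)$ is slowly varying at infinity if $L(xt)/L(t)\to1$ as $t\to\infty$ for every $x>0$. *)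

theory Defs
  imports "HOL-Analysis.Analysis"
begin

definition slowly_varying :: "(real \<Rightarrow> real) \<Rightarrow> bool" where
  "slowly_varying L \<longleftrightarrow>
     L \<in> borel_measurable lborel \<and> (\<forall>t\<ge>0. L t > 0) \<and>
     (\<forall>x>0. ((\<lambda>t. L (x * t) / L t) \<longlongrightarrow> 1) at_top)"

definition tail_int :: "(real \<Rightarrow> real) \<Rightarrow> real \<Rightarrow> real" where
  "tail_int k t = (LBINT s:{t..}. k s)"

end

theory Submission
  imports Defs
begin

lemma at_within_ge0: "0 \<le> x \<Longrightarrow> x < b \<Longrightarrow> at x within {0..} = at x within {0..(b::real)}"
  by (rule at_within_nhd[where S="{x-1<..<b}"]) auto

locale setting =
  fixes k r L :: "real \<Rightarrow> real" and \<alpha> a :: real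
  assumes C1_int: "set_integrable lborel {0..} k"
    and C1_cont: "continuous_on {0..} k"
    and C1_pos: "\<And>t. t \<ge> 0 \<Longrightarrow> k t > 0"
    and C2: "convex_on {0..} (\<lambda>t. ln (tail_int k t))"
    and alpha: "0 < \<alpha>" "\<alpha> < 1"
    and L_sv: "slowly_varying L"
    and C3: "\<And>t. t > 0 \<Longrightarrow> tail_int k t = L t * t powr (- \<alpha>)"
    and a_def: "a = - (LBINT s:{0..}. k s)"
    and r0: "r 0 = 1"
    and r_eq: "\<And>t. t \<ge> 0 \<Longrightarrow>
       (r has_real_derivative (a * r t + (LBINT s:{0..t}. k (t - s) * r s))) (at t within {0..})"
begin

definition lam :: "real \<Rightarrow> real" where "lam t = tail_int k t"

lemma L_pos: "t \<ge> 0 \<Longrightarrow> L t > 0"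
  using L_sv unfolding slowly_varying_def by auto

lemma L_lim: "x > 0 \<Longrightarrow> ((\<lambda>t. L (x * t) / L t) \<longlongrightarrow> 1) at_top"
  using L_sv unfolding slowly_varying_def by auto

lemma lam_eq: "t > 0 \<Longrightarrow> lam t = L t * t powr (- \<alpha>)"
  using C3 lam_def by auto

lemma lam_pos_gt: "t > 0 \<Longrightarrow> lam t > 0"
  using lam_eq L_pos by auto

lemma k_cont_Icc: "continuous_on {0..b} k"
  using C1_cont by (rule continuous_on_subset) auto

lemma k_int_Icc: "set_integrable lborel {0..b} k"
  by (rule set_integrable_subset[OF C1_int]) auto

lemma lam_split: assumes "0 \<le> t" shows "lam 0 = integral {0..t} k + lam t"
proof -
  have i1: "set_integrable lborel {0..t} k" by (rule k_int_Icc)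
  have i2: "set_integrable lborel {t<..} k"
    by (rule set_integrable_subset[OF C1_int]) (use assms in auto)
  have "{0..} = {0..t} \<union> {t<..}" using assms by auto
  moreover have "(LBINT s:{0..t} \<union> {t<..}. k s) = (LBINT s:{0..t}. k s) + (LBINT s:{t<..}. k s)"
    by (rule set_integral_Un[OF _ i1 i2]) auto
  ultimately have "lam 0 = (LBINT s:{0..t}. k s) + (LBINT s:{t<..}. k s)"
    unfolding lam_def tail_int_def by simp
  moreover have "(LBINT s:{0..t}. k s) = integral {0..t} k"
    using set_borel_integral_eq_integral(2)[OF i1] .
  moreover have "(LBINT s:{t<..}. k s) = (LBINT s:{t..}. k s)"
  proof (rule set_integral_cong_set)
    show "set_borel_measurable lborel {t..} k"
      using set_integrable_subset[OF C1_int, of "{t..}"] assms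
      by (auto intro: borel_measurable_integrable simp: set_integrable_def set_borel_measurable_def)
    show "set_borel_measurable lborel {t<..} k"
      using i2 by (auto intro: borel_measurable_integrable simp: set_integrable_def set_borel_measurable_def)
    show "AE x in lborel. (x \<in> {t..}) = (x \<in> {t<..})"
      using AE_lborel_singleton[of t] by eventually_elim auto
  qed
  ultimately show ?thesis unfolding lam_def tail_int_def by simp
qed

lemma k_nonneg: "0 \<le> t \<Longrightarrow> 0 \<le> k t"
  using C1_pos less_imp_le by blast

lemma int_k_nonneg: "0 \<le> t \<Longrightarrow> integral {0..t} k \<ge> 0"
  by (rule integral_nonneg) (use k_cont_Icc[of t] k_nonneg in \<open>auto intro: integrable_continuous_real\<close>)

lemma lam_eq2: "0 \<le> t \<Longrightarrow> lam t = lam 0 - integral {0..t} k"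
  using lam_split by auto

lemma lam0_pos: "lam 0 > 0"
  using lam_split[of 1] int_k_nonneg[of 1] lam_pos_gt[of 1] by auto

lemma lam_pos: "t \<ge> 0 \<Longrightarrow> lam t > 0"
  using lam0_pos lam_pos_gt by (cases "t = 0") auto

lemma lam_deriv_Icc: assumes "0 \<le> x" "x \<le> b"
  shows "(lam has_real_derivative - k x) (at x within {0..b})"
proof -
  have "((\<lambda>x. integral {0..x} k) has_real_derivative k x) (at x within {0..b})"
    by (rule integral_has_real_derivative[OF k_cont_Icc]) (use assms in auto)
  from DERIV_diff[OF DERIV_const[of "lam 0"] this]
  have "((\<lambda>x. lam 0 - integral {0..x} k) has_real_derivative (- k x)) (at x within {0..b})" by simp
  thus ?thesis
    by (rule has_field_derivative_transform_within[where d=1]) (use assms in \<open>auto intro: lam_eq2[symmetric]\<close>)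
qed

lemma lam_deriv: assumes "0 \<le> x"
  shows "(lam has_real_derivative - k x) (at x within {0..})"
proof -
  have e: "at x within {0..} = at x within {0..x+1}" by (rule at_within_ge0) (use assms in auto)
  show ?thesis unfolding e by (rule lam_deriv_Icc) (use assms in auto)
qed

lemma lam_cont: "continuous_on {0..} lam"
  unfolding continuous_on_eq_continuous_within
proof
  fix x :: real assume "x \<in> {0..}"
  thus "continuous (at x within {0..}) lam"
    using lam_deriv[of x] by (intro DERIV_continuous) auto
qed

lemma lam_antimono: "0 \<le> s \<Longrightarrow> s \<le> t \<Longrightarrow> lam t \<le> lam s"
proof -
  assume a: "0 \<le> s" "s \<le> t"
  have "integral {0..s} k \<le> integral {0..t} k"
    by (rule integral_subset_le) (use a k_cont_Icc k_nonneg in \<open>auto intro: integrable_continuous_real\<close>)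
  thus ?thesis using lam_eq2[of s] lam_eq2[of t] a by linarith
qed

lemma lam_le0: "0 \<le> t \<Longrightarrow> lam t \<le> lam 0"
  using lam_antimono by auto

lemma lnconv: assumes "0 \<le> u" "u \<le> v" "0 \<le> d"
  shows "ln (lam (u + d)) + ln (lam v) \<le> ln (lam (v + d)) + ln (lam u)"
proof (cases "d = 0 \<or> u = v")
  case True thus ?thesis by auto
next
  case False
  define f where "f = (\<lambda>t. ln (lam t))"
  have cf: "convex_on {0..} f" using C2 unfolding f_def lam_def .
  define D where "D = v + d - u"
  have D: "D > 0" using False assms unfolding D_def by auto
  define th where "th = d / D"
  define ph where "ph = (v - u) / D"
  have th: "0 \<le> th" "th \<le> 1" and ph: "0 \<le> ph" "ph \<le> 1"
    using D assms unfolding th_def ph_def D_def by (auto simp: field_simps)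
  have thD: "th * D = d" and phD: "ph * D = v - u" using D unfolding th_def ph_def by auto
  have e1: "u + d = (1 - th) * u + th * (v + d)"
  proof -
    have "(1 - th) * u + th * (v + d) = u + th * D" unfolding D_def by (simp add: algebra_simps)
    thus ?thesis using thD by simp
  qed
  have e2: "v = (1 - ph) * u + ph * (v + d)"
  proof -
    have "(1 - ph) * u + ph * (v + d) = u + ph * D" unfolding D_def by (simp add: algebra_simps)
    thus ?thesis using phD by simp
  qed
  have s: "th + ph = 1"
  proof -
    have "th + ph = (d + (v - u)) / D" unfolding th_def ph_def by (simp add: add_divide_distrib)
    also have "\<dots> = 1" using D unfolding D_def by simp
    finally show ?thesis .
  qed
  have "f (u + d) \<le> (1 - th) * f u + th * f (v + d)"
    unfolding e1 using convex_onD[OF cf, of th u "v+d"] th assms by simp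
  moreover have "f v \<le> (1 - ph) * f u + ph * f (v + d)"
    by (subst e2) (use convex_onD[OF cf, of ph u "v+d"] ph assms in simp)
  moreover have "th * f u + ph * f u = f u" "th * f (v+d) + ph * f (v+d) = f (v+d)"
    using s by (metis distrib_right mult_1)+
  ultimately have "f (u + d) + f v \<le> f u + f (v + d)"
    by (simp add: algebra_simps)
  thus ?thesis unfolding f_def by simp
qed

lemma ratio_mono: assumes "0 \<le> u" "u \<le> v" "0 \<le> d"
  shows "lam (u + d) * lam v \<le> lam (v + d) * lam u"
proof -
  have p: "lam (u+d) > 0" "lam v > 0" "lam (v+d) > 0" "lam u > 0"
    using assms lam_pos by auto
  have "ln (lam (u + d) * lam v) \<le> ln (lam (v + d) * lam u)"
    using lnconv[OF assms] p by (simp add: ln_mult)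
  thus ?thesis using p by simp
qed

end

lemma cont_reflect: fixes f :: "real \<Rightarrow> real"
  shows "continuous_on {0..} f \<Longrightarrow> continuous_on {0..T} (\<lambda>s. f (T - s))"
  by (rule continuous_on_compose2[of "{0..}" f "{0..T}" "\<lambda>s. T - s"]) (auto intro!: continuous_intros)

lemma cont_sub: fixes f :: "real \<Rightarrow> real" shows "continuous_on {0..} f \<Longrightarrow> continuous_on {0..T} f"
  by (rule continuous_on_subset) auto

lemma stretch01: fixes h :: "real \<Rightarrow> real" and t :: real assumes "0 < t" shows "integral {0..t} h = t * integral {0..1} (\<lambda>\<sigma>. h (t*\<sigma>))"
proof -
  have im: "(\<lambda>x. x / t) ` {0..t} = {0..1}"
  proof
    show "(\<lambda>x. x / t) ` {0..t} \<subseteq> {0..1}" using assms by (auto simp: field_simps)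
    show "{0..1} \<subseteq> (\<lambda>x. x / t) ` {0..t}"
    proof
      fix y :: real assume "y \<in> {0..1}"
      thus "y \<in> (\<lambda>x. x / t) ` {0..t}"
        using assms by (intro image_eqI[of _ _ "t*y"]) (auto simp: mult_le_cancel_left1)
    qed
  qed
  have "integral {0..1} (\<lambda>\<sigma>. h (t*\<sigma>)) = (1/t) * integral {0..t} h"
    using integral_stretch_real[of t 0 t h] assms unfolding im by simp
  thus ?thesis using assms by simp
qed

definition conv :: "(real \<Rightarrow> real) \<Rightarrow> (real \<Rightarrow> real) \<Rightarrow> real \<Rightarrow> real" where
  "conv f g t = integral {0..t} (\<lambda>s. f (t - s) * g s)"

lemma conv_alt: "0 \<le> t \<Longrightarrow> conv f g t = t * integral {0..1} (\<lambda>\<sigma>. f (t - t*\<sigma>) * g (t*\<sigma>))"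
proof (cases "t = 0")
  case False
  assume "0 \<le> t" hence "0 < t" using False by auto
  thus ?thesis unfolding conv_def by (rule stretch01)
qed (simp add: conv_def)

lemma conv_cont: fixes f g :: "real \<Rightarrow> real" assumes f: "continuous_on {0..} f" and g: "continuous_on {0..} g"
  shows "continuous_on {0..} (conv f g)"
proof -
  have c1: "continuous_on ({0..} \<times> {0..1}) (\<lambda>x. f (fst x - fst x * snd x))"
    by (rule continuous_on_compose2[OF f]) (auto intro!: continuous_intros simp: mult_left_le)
  have c2: "continuous_on ({0..} \<times> {0..1}) (\<lambda>x. g (fst x * snd x))"
    by (rule continuous_on_compose2[OF g]) (auto intro!: continuous_intros)
  have "continuous_on ({0..} \<times> cbox 0 1) (\<lambda>(t, \<sigma>). f (t - t*\<sigma>) * g (t*\<sigma>))"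
    using continuous_on_mult[OF c1 c2] by (simp add: case_prod_beta)
  from integral_continuous_on_param[OF this]
  have "continuous_on {0..} (\<lambda>t. integral {0..1} (\<lambda>\<sigma>. f (t - t*\<sigma>) * g (t*\<sigma>)))" by simp
  hence "continuous_on {0..} (\<lambda>t. t * integral {0..1} (\<lambda>\<sigma>. f (t - t*\<sigma>) * g (t*\<sigma>)))"
    by (intro continuous_intros)
  thus ?thesis by (rule continuous_on_cong[THEN iffD1, rotated 2]) (auto simp: conv_alt)
qed

lemma conv_integrable: fixes f g :: "real \<Rightarrow> real" assumes f: "continuous_on {0..} f" and g: "continuous_on {0..} g" and "0 \<le> t"
  shows "(\<lambda>s. f (t - s) * g s) integrable_on {0..t}"
  by (rule integrable_continuous_real, rule continuous_on_mult, rule cont_reflect[OF f], rule cont_sub[OF g])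

context setting begin

lemma lam0_eq: "lam 0 = (LBINT s:{0..}. k s)"
  unfolding lam_def tail_int_def by simp

lemma a_eq: "a = - lam 0" using a_def lam0_eq by simp

lemma r_cont_within: "0 \<le> t \<Longrightarrow> continuous (at t within {0..}) r"
  by (rule DERIV_continuous[OF r_eq])

lemma r_cont: "continuous_on {0..} r"
  unfolding continuous_on_eq_continuous_within using r_cont_within by auto

lemma k_conv_eq: assumes "0 \<le> t" shows "(LBINT s:{0..t}. k (t - s) * r s) = conv k r t"
proof -
  have "continuous_on {0..t} (\<lambda>s. k (t - s) * r s)"
    by (intro continuous_intros cont_reflect cont_sub C1_cont r_cont)
  from set_borel_integral_eq_integral(2)[OF borel_integrable_atLeastAtMost'[OF this]]
  show ?thesis unfolding conv_def .
qed

definition rho :: "real \<Rightarrow> real" where "rho t = lam 0 * r t - conv k r t"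

lemma rho_cont: "continuous_on {0..} rho"
  unfolding rho_def by (intro continuous_intros conv_cont C1_cont r_cont)

lemma r_deriv: assumes "0 \<le> t" shows "(r has_real_derivative - rho t) (at t within {0..})"
  using r_eq[OF assms] k_conv_eq[OF assms] unfolding rho_def a_eq by (simp add: algebra_simps)

lemma rho0: "rho 0 = lam 0"
  unfolding rho_def conv_def using r0 by simp

lemma conv_lam_rho: assumes t: "0 \<le> t" shows "conv lam rho t = lam t - rho t"
proof -
  define G where "G s = lam (t - s) * r s" for s
  have dG: "(G has_real_derivative (lam (t - s) * (- rho s) + k (t - s) * r s)) (at s within {0..t})"
    if s: "s \<in> {0..t}" for s
  proof -
    have im: "(\<lambda>s. t - s) ` {0..t} = {0..t}"
    proof
      show "(\<lambda>s. t - s) ` {0..t} \<subseteq> {0..t}" by auto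
      show "{0..t} \<subseteq> (\<lambda>s. t - s) ` {0..t}"
      proof
        fix y assume "y \<in> {0..t}" thus "y \<in> (\<lambda>s. t - s) ` {0..t}" by (intro image_eqI[of _ _ "t - y"]) auto
      qed
    qed
    have d1: "(lam has_real_derivative - k (t - s)) (at ((\<lambda>s. t - s) s) within ((\<lambda>s. t - s) ` {0..t}))"
      unfolding im using lam_deriv_Icc[of "t - s" t] s by auto
    have d2: "((\<lambda>s. t - s) has_real_derivative -1) (at s within {0..t})"
      by (auto intro!: derivative_eq_intros)
    from DERIV_image_chain[OF d1 d2]
    have d3: "((\<lambda>s. lam (t - s)) has_real_derivative k (t - s)) (at s within {0..t})"
      by (simp add: o_def)
    have d4: "(r has_real_derivative - rho s) (at s within {0..t})"
      by (rule DERIV_subset[OF r_deriv]) (use s in auto)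
    show ?thesis unfolding G_def using DERIV_mult'[OF d3 d4] by simp
  qed
  have "((\<lambda>s. lam (t - s) * (- rho s) + k (t - s) * r s) has_integral (G t - G 0)) {0..t}"
    by (rule fundamental_theorem_of_calculus) (use t dG in \<open>auto simp: has_real_derivative_iff_has_vector_derivative[symmetric]\<close>)
  moreover have "((\<lambda>s. k (t - s) * r s) has_integral conv k r t) {0..t}"
    unfolding conv_def using conv_integrable[OF C1_cont r_cont t] by (simp add: integrable_integral)
  ultimately have "((\<lambda>s. k (t - s) * r s - (lam (t - s) * (- rho s) + k (t - s) * r s))
      has_integral (conv k r t - (G t - G 0))) {0..t}"
    by (intro has_integral_diff)
  hence "((\<lambda>s. lam (t - s) * rho s) has_integral (lam t - rho t)) {0..t}"
    unfolding G_def rho_def using r0 by (simp add: algebra_simps)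
  thus ?thesis unfolding conv_def by (simp add: integral_unique)
qed

lemma kaluza_ineq:
  assumes m: "0 \<le> m" "m \<le> T" and pos: "\<And>s. 0 \<le> s \<Longrightarrow> s \<le> m \<Longrightarrow> rho s \<ge> 0"
    and S: "\<And>s. m \<le> s \<Longrightarrow> s \<le> T \<Longrightarrow> rho s \<le> S" and S0: "0 \<le> S"
  shows "rho T \<ge> (lam T / lam m) * rho m - lam 0 * (T - m) * S"
proof -
  have T: "0 \<le> T" using m by auto
  define h where "h s = lam (T - s) * rho s" for s
  have hint: "h integrable_on {0..T}" unfolding h_def by (rule conv_integrable[OF lam_cont rho_cont T])
  have hint1: "h integrable_on {0..m}" by (rule integrable_on_subinterval[OF hint]) (use m in auto)
  have hint2: "h integrable_on {m..T}" by (rule integrable_on_subinterval[OF hint]) (use m in auto)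
  have split: "integral {0..T} h = integral {0..m} h + integral {m..T} h"
    using Henstock_Kurzweil_Integration.integral_combine[OF m hint] by simp
  have lm: "lam m > 0" using lam_pos m by auto
  have i1: "integral {0..m} h \<le> integral {0..m} (\<lambda>s. (lam T / lam m) * (lam (m - s) * rho s))"
  proof (rule integral_le[OF hint1])
    show "(\<lambda>s. lam T / lam m * (lam (m - s) * rho s)) integrable_on {0..m}"
      using integrable_on_cmult_left[OF conv_integrable[OF lam_cont rho_cont m(1)], of "lam T / lam m"] by simp
    fix s assume s: "s \<in> {0..m}"
    have "lam (m - s + (T - m)) * lam m \<le> lam (m + (T - m)) * lam (m - s)"
      by (rule ratio_mono) (use s m in auto)
    hence "lam (T - s) \<le> lam T / lam m * lam (m - s)" using lm by (simp add: field_simps)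
    thus "h s \<le> lam T / lam m * (lam (m - s) * rho s)"
      unfolding h_def using pos[of s] s mult_right_mono by fastforce
  qed
  have i1': "integral {0..m} (\<lambda>s. lam (m - s) * rho s) = lam m - rho m"
    using conv_lam_rho[OF m(1)] unfolding conv_def .
  have A: "integral {0..m} h \<le> (lam T / lam m) * (lam m - rho m)"
    using i1 unfolding integral_mult_right i1' .
  have i2: "integral {m..T} h \<le> integral {m..T} (\<lambda>s. lam 0 * S)"
  proof (rule integral_le[OF hint2])
    fix s assume s: "s \<in> {m..T}"
    have l: "0 < lam (T - s)" "lam (T - s) \<le> lam 0" using s lam_pos lam_le0 by auto
    show "h s \<le> lam 0 * S"
    proof (cases "rho s \<ge> 0")
      case True
      have "h s \<le> lam 0 * rho s" unfolding h_def using l True mult_right_mono by blast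
      also have "\<dots> \<le> lam 0 * S" using S[of s] s lam0_pos by auto
      finally show ?thesis .
    next
      case False
      hence "h s \<le> 0" unfolding h_def using l mult_pos_neg[of "lam (T - s)" "rho s"] by simp
      also have "0 \<le> lam 0 * S" using S0 lam0_pos by auto
      finally show ?thesis .
    qed
  qed auto
  have B: "integral {m..T} h \<le> lam 0 * S * (T - m)" using i2 m by (simp add: algebra_simps)
  have "rho T = lam T - integral {0..T} h"
    using conv_lam_rho[OF T] unfolding conv_def h_def by simp
  hence "rho T \<ge> lam T - (lam T / lam m) * (lam m - rho m) - lam 0 * S * (T - m)"
    using split A B by linarith
  moreover have "lam T - (lam T / lam m) * (lam m - rho m) = (lam T / lam m) * rho m"
    using lm by (simp add: field_simps)
  ultimately show ?thesis by (simp add: algebra_simps)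
qed

end

context setting begin

lemma rho_pos: assumes "0 \<le> t1" shows "rho t1 > 0"
proof (rule ccontr)
  assume "\<not> rho t1 > 0" hence neg: "rho t1 \<le> 0" by simp
  define Z where "Z = {0..t1} \<inter> rho -` {..0}"
  have Zc: "closed Z" unfolding Z_def
    by (rule continuous_closed_preimage) (auto intro: cont_sub rho_cont)
  have Zne: "Z \<noteq> {}" using neg assms unfolding Z_def by auto
  have Zb: "bdd_below Z" unfolding Z_def by (rule bdd_belowI[of _ 0]) auto
  define T where "T = Inf Z"
  have TZ: "T \<in> Z" unfolding T_def by (rule closed_contains_Inf[OF Zne Zb Zc])
  hence T: "0 \<le> T" "T \<le> t1" "rho T \<le> 0" unfolding Z_def by auto
  have before: "rho s > 0" if "0 \<le> s" "s < T" for s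
  proof (rule ccontr)
    assume "\<not> rho s > 0"
    hence "s \<in> Z" using that T unfolding Z_def by auto
    hence "T \<le> s" unfolding T_def by (rule cInf_lower[OF _ Zb])
    thus False using that by simp
  qed
  have Tp: "T > 0" using T rho0 lam0_pos by (cases "T = 0") auto
  define l0 where "l0 = lam 0"
  have l0: "l0 > 0" using lam0_pos l0_def by simp
  have lT: "lam T > 0" using lam_pos T by auto
  define \<delta> where "\<delta> = min T (lam T / (2 * l0^2))"
  have \<delta>: "\<delta> > 0" "\<delta> \<le> T" "\<delta> \<le> lam T / (2 * l0^2)" unfolding \<delta>_def using Tp lT l0 by auto
  obtain m where m: "m \<in> {T - \<delta>..T}" and mmax: "\<And>y. y \<in> {T - \<delta>..T} \<Longrightarrow> rho y \<le> rho m"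
  proof -
    have "continuous_on {T - \<delta>..T} rho"
      by (rule continuous_on_subset[OF rho_cont]) (use \<delta> in auto)
    moreover have "{T - \<delta>..T} \<noteq> {}" using \<delta> by auto
    ultimately have "\<exists>x\<in>{T - \<delta>..T}. \<forall>y\<in>{T - \<delta>..T}. rho y \<le> rho x"
      by (intro continuous_attains_sup) auto
    thus ?thesis using that by blast
  qed
  have "rho (T - \<delta>) > 0" by (rule before) (use \<delta> in auto)
  hence rm: "rho m > 0" using mmax[of "T - \<delta>"] \<delta> by auto
  hence mT: "m < T" using m T by (cases "m = T") auto
  have m0: "0 \<le> m" using m \<delta> by auto
  have ineq: "rho T \<ge> (lam T / lam m) * rho m - lam 0 * (T - m) * rho m"
  proof (rule kaluza_ineq)
    show "0 \<le> m" "m \<le> T" using m0 mT by auto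
    show "\<And>s. 0 \<le> s \<Longrightarrow> s \<le> m \<Longrightarrow> rho s \<ge> 0" proof -
      fix s assume "0 \<le> s" "s \<le> m"
      thus "rho s \<ge> 0" using before[of s] mT by simp
    qed
    show "\<And>s. m \<le> s \<Longrightarrow> s \<le> T \<Longrightarrow> rho s \<le> rho m" using mmax m by auto
    show "0 \<le> rho m" using rm by simp
  qed
  have lm: "0 < lam m" "lam m \<le> l0" using lam_pos lam_le0 m0 l0_def by auto
  have q1: "lam T / lam m \<ge> lam T / l0" using lm lT by (simp add: frac_le)
  have "l0 * (T - m) \<le> l0 * \<delta>" using m l0 by (intro mult_left_mono) auto
  also have "\<dots> \<le> l0 * (lam T / (2 * l0^2))" using \<delta> l0 by (intro mult_left_mono) auto
  also have "\<dots> = lam T / (2 * l0)" using l0 by (simp add: power2_eq_square field_simps)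
  finally have q2: "l0 * (T - m) \<le> lam T / (2 * l0)" .
  have "lam T / l0 - lam T / (2 * l0) \<le> lam T / lam m - l0 * (T - m)" using q1 q2 by linarith
  hence "(lam T / l0 - lam T / (2 * l0)) * rho m \<le> (lam T / lam m - l0 * (T - m)) * rho m"
    using rm by (intro mult_right_mono) auto
  moreover have "lam T / l0 - lam T / (2 * l0) = lam T / (2 * l0)" using l0 by (simp add: field_simps)
  ultimately have "rho T \<ge> lam T / (2 * l0) * rho m" using ineq unfolding l0_def by (simp add: algebra_simps)
  moreover have "lam T / (2 * l0) * rho m > 0" using lT l0 rm by simp
  ultimately show False using T by simp
qed

lemma rho_nonneg: "0 \<le> t \<Longrightarrow> rho t \<ge> 0"
  using rho_pos[of t] by simp

lemma rho_le_lam: assumes "0 \<le> t" shows "rho t \<le> lam t"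
proof -
  have "conv lam rho t \<ge> 0" unfolding conv_def
  proof (rule integral_nonneg[OF conv_integrable[OF lam_cont rho_cont assms]])
    fix x assume "x \<in> {0..t}"
    hence "0 \<le> lam (t - x)" "0 \<le> rho x" using lam_pos[of "t - x"] rho_nonneg[of x] by auto
    thus "0 \<le> lam (t - x) * rho x" by simp
  qed
  thus ?thesis using conv_lam_rho[OF assms] by simp
qed

lemma r_ftc: assumes "0 \<le> s" "s \<le> t" shows "r t - r s = - integral {s..t} rho"
proof -
  have "((\<lambda>x. - rho x) has_integral (r t - r s)) {s..t}"
  proof (rule fundamental_theorem_of_calculus)
    fix x assume x: "x \<in> {s..t}"
    have "(r has_real_derivative - rho x) (at x within {s..t})"
      by (rule DERIV_subset[OF r_deriv]) (use x assms in auto)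
    thus "(r has_vector_derivative - rho x) (at x within {s..t})"
      by (simp add: has_real_derivative_iff_has_vector_derivative)
  qed (use assms in auto)
  hence "integral {s..t} (\<lambda>x. - rho x) = r t - r s" by (rule integral_unique)
  thus ?thesis by simp
qed

lemma r_eq1: "0 \<le> t \<Longrightarrow> r t = 1 - integral {0..t} rho"
  using r_ftc[of 0 t] r0 by simp

lemma r_mono: assumes "0 \<le> s" "s \<le> t" shows "r t \<le> r s"
proof -
  have "integral {s..t} rho \<ge> 0"
  proof (rule integral_nonneg)
    show "rho integrable_on {s..t}"
      by (rule integrable_continuous_real, rule continuous_on_subset[OF rho_cont]) (use assms in auto)
    fix x assume "x \<in> {s..t}" thus "0 \<le> rho x" using rho_nonneg assms by auto
  qed
  thus ?thesis using r_ftc[OF assms] by simp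
qed

lemma r_le1: "0 \<le> t \<Longrightarrow> r t \<le> 1"
  using r_mono[of 0 t] r0 by simp

end

definition ext :: "(real \<Rightarrow> real) \<Rightarrow> real \<Rightarrow> real" where
  "ext f x = indicator {0..} x * f x"

lemma ext_meas: assumes "continuous_on {0..} f" shows "ext f \<in> borel_measurable borel"
proof -
  have "(\<lambda>x. indicator {0..} x *\<^sub>R f x) \<in> borel_measurable borel"
    by (rule borel_measurable_continuous_on_indicator) (use assms in auto)
  thus ?thesis unfolding ext_def by simp
qed

lemma ext_nonneg: "(\<And>x. 0 \<le> x \<Longrightarrow> 0 \<le> f x) \<Longrightarrow> 0 \<le> ext f x"
  unfolding ext_def by (auto split: split_indicator)

definition lap :: "(real \<Rightarrow> real) \<Rightarrow> real \<Rightarrow> ennreal" where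
  "lap h z = (\<integral>\<^sup>+ t. ennreal (exp (- z * t) * ext h t) \<partial>lborel)"

lemma conv_nn:
  fixes f g :: "real \<Rightarrow> real"
  assumes f: "continuous_on {0..} f" and g: "continuous_on {0..} g"
    and fp: "\<And>x. 0 \<le> x \<Longrightarrow> 0 \<le> f x" and gp: "\<And>x. 0 \<le> x \<Longrightarrow> 0 \<le> g x"
  shows "ennreal (ext (conv f g) t) = (\<integral>\<^sup>+ s. ennreal (ext f (t - s) * ext g s) \<partial>lborel)"
proof (cases "0 \<le> t")
  case True
  have hi: "((\<lambda>s. f (t - s) * g s) has_integral conv f g t) {0..t}"
    unfolding conv_def using conv_integrable[OF f g True] by (simp add: integrable_integral)
  have "(\<integral>\<^sup>+ s. ennreal (indicator {0..t} s * (f (t - s) * g s)) \<partial>lborel) = ennreal (conv f g t)"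
    by (rule nn_integral_has_integral_lebesgue[OF _ hi]) (use fp gp in auto)
  moreover have "(\<lambda>s. ennreal (ext f (t - s) * ext g s)) = (\<lambda>s. ennreal (indicator {0..t} s * (f (t - s) * g s)))"
    by (rule ext) (auto simp: ext_def split: split_indicator)
  ultimately show ?thesis using True unfolding ext_def by simp
next
  case False
  hence "(\<lambda>s. ennreal (ext f (t - s) * ext g s)) = (\<lambda>s. 0)"
    by (intro ext) (auto simp: ext_def split: split_indicator)
  thus ?thesis using False unfolding ext_def by simp
qed

lemma lap_conv:
  fixes f g :: "real \<Rightarrow> real"
  assumes f: "continuous_on {0..} f" and g: "continuous_on {0..} g"
    and fp: "\<And>x. 0 \<le> x \<Longrightarrow> 0 \<le> f x" and gp: "\<And>x. 0 \<le> x \<Longrightarrow> 0 \<le> g x"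
  shows "lap (conv f g) z = lap f z * lap g z"
proof -
  note [measurable] = ext_meas[OF f] ext_meas[OF g]
  define F where "F t s = ennreal (exp (- z * t) * ext f (t - s) * ext g s)" for t s
  have efp: "\<And>x. 0 \<le> ext f x" and egp: "\<And>x. 0 \<le> ext g x" using ext_nonneg fp gp by blast+
  have step1: "ennreal (exp (- z * t) * ext (conv f g) t) = (\<integral>\<^sup>+ s. F t s \<partial>lborel)" for t
  proof -
    have cn: "0 \<le> ext (conv f g) t" using ennreal_le_iff2 conv_nn[OF f g fp gp, of t]
      by (auto simp: ext_def conv_def split: split_indicator intro!: integral_nonneg
               conv_integrable[OF f g] mult_nonneg_nonneg fp gp)
    have "ennreal (exp (- z * t) * ext (conv f g) t) = ennreal (exp (- z * t)) * ennreal (ext (conv f g) t)"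
      using cn by (simp add: ennreal_mult)
    also have "\<dots> = ennreal (exp (- z * t)) * (\<integral>\<^sup>+ s. ennreal (ext f (t - s) * ext g s) \<partial>lborel)"
      using conv_nn[OF f g fp gp, of t] by simp
    also have "\<dots> = (\<integral>\<^sup>+ s. ennreal (exp (- z * t)) * ennreal (ext f (t - s) * ext g s) \<partial>lborel)"
      by (rule nn_integral_cmult[symmetric]) measurable
    also have "\<dots> = (\<integral>\<^sup>+ s. F t s \<partial>lborel)"
      unfolding F_def using efp egp by (intro nn_integral_cong) (simp add: ennreal_mult[symmetric] mult.assoc)
    finally show ?thesis .
  qed
  have meas: "case_prod (\<lambda>s t. F t s) \<in> borel_measurable (lborel \<Otimes>\<^sub>M lborel)"
    unfolding F_def by measurable
  have "lap (conv f g) z = (\<integral>\<^sup>+ t. (\<integral>\<^sup>+ s. F t s \<partial>lborel) \<partial>lborel)"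
    unfolding lap_def using step1 by simp
  also have "\<dots> = (\<integral>\<^sup>+ s. (\<integral>\<^sup>+ t. F t s \<partial>lborel) \<partial>lborel)"
    using lborel_pair.Fubini'[OF meas] by simp
  also have "\<dots> = (\<integral>\<^sup>+ s. ennreal (exp (- z * s) * ext g s) * lap f z \<partial>lborel)"
  proof (rule nn_integral_cong)
    fix s
    have "(\<integral>\<^sup>+ t. F t s \<partial>lborel) = (\<integral>\<^sup>+ u. F (s + 1 * u) s \<partial>lborel)"
      using nn_integral_real_affine[of "\<lambda>t. F t s" 1 s] unfolding F_def by simp
    also have "\<dots> = (\<integral>\<^sup>+ u. ennreal (exp (- z * s) * ext g s) * ennreal (exp (- z * u) * ext f u) \<partial>lborel)"
      unfolding F_def using efp egp
      by (intro nn_integral_cong) (simp add: ennreal_mult[symmetric] exp_add[symmetric] algebra_simps)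
    also have "\<dots> = ennreal (exp (- z * s) * ext g s) * lap f z"
      unfolding lap_def by (rule nn_integral_cmult) measurable
    finally show "(\<integral>\<^sup>+ t. F t s \<partial>lborel) = ennreal (exp (- z * s) * ext g s) * lap f z" .
  qed
  also have "\<dots> = lap g z * lap f z"
    unfolding lap_def by (rule nn_integral_multc) measurable
  finally show ?thesis by (simp add: mult.commute)
qed

lemma lap_add_eq:
  fixes h1 h2 h3 :: "real \<Rightarrow> real"
  assumes c: "continuous_on {0..} h1" "continuous_on {0..} h2"
    and p: "\<And>x. 0 \<le> x \<Longrightarrow> 0 \<le> h1 x" "\<And>x. 0 \<le> x \<Longrightarrow> 0 \<le> h2 x"
    and e: "\<And>x. 0 \<le> x \<Longrightarrow> h1 x + h2 x = h3 x"
  shows "lap h1 z + lap h2 z = lap h3 z"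
proof -
  note [measurable] = ext_meas[OF c(1)] ext_meas[OF c(2)]
  have "lap h1 z + lap h2 z = (\<integral>\<^sup>+ t. ennreal (exp (- z * t) * ext h1 t) + ennreal (exp (- z * t) * ext h2 t) \<partial>lborel)"
    unfolding lap_def by (rule nn_integral_add[symmetric]) measurable
  also have "\<dots> = lap h3 z" unfolding lap_def
  proof (rule nn_integral_cong)
    fix t
    have "0 \<le> ext h1 t" "0 \<le> ext h2 t" using ext_nonneg p by blast+
    moreover have "ext h1 t + ext h2 t = ext h3 t" using e unfolding ext_def by (auto split: split_indicator)
    ultimately show "ennreal (exp (- z * t) * ext h1 t) + ennreal (exp (- z * t) * ext h2 t) = ennreal (exp (- z * t) * ext h3 t)"
      by (simp add: ennreal_plus[symmetric] distrib_left[symmetric] del: ennreal_plus)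
  qed
  finally show ?thesis .
qed

lemma lap_exp: assumes "0 < z" shows "(\<integral>\<^sup>+ t. ennreal (indicator {0..} t * exp (- z * t)) \<partial>lborel) = ennreal (1 / z)"
  using nn_integral_has_integral_lebesgue[OF _ has_integral_exp_minus_to_infinity[OF assms, of 0]] by simp

lemma lap_bound:
  fixes h :: "real \<Rightarrow> real"
  assumes c: "continuous_on {0..} h" and b: "\<And>x. 0 \<le> x \<Longrightarrow> h x \<le> M" and "0 \<le> M" and z: "0 < z"
  shows "lap h z \<le> ennreal (M / z)"
proof -
  have "lap h z \<le> (\<integral>\<^sup>+ t. ennreal M * ennreal (indicator {0..} t * exp (- z * t)) \<partial>lborel)"
    unfolding lap_def
  proof (rule nn_integral_mono)
    fix t
    have "exp (- z * t) * ext h t \<le> M * (indicator {0..} t * exp (- z * t))"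
      using b[of t] \<open>0 \<le> M\<close> unfolding ext_def by (auto split: split_indicator)
    thus "ennreal (exp (- z * t) * ext h t) \<le> ennreal M * ennreal (indicator {0..} t * exp (- z * t))"
      using \<open>0 \<le> M\<close> by (simp add: ennreal_mult[symmetric] ennreal_leI)
  qed
  also have "\<dots> = ennreal M * (\<integral>\<^sup>+ t. ennreal (indicator {0..} t * exp (- z * t)) \<partial>lborel)"
    by (rule nn_integral_cmult) measurable
  also have "\<dots> = ennreal M * ennreal (1 / z)"
    by (simp only: lap_exp[OF z])
  also have "\<dots> = ennreal (M / z)" using \<open>0 \<le> M\<close> z by (simp add: ennreal_mult[symmetric])
  finally show ?thesis .
qed

lemma lap_one: assumes "0 < z" shows "lap (\<lambda>_. 1) z = ennreal (1 / z)"
  unfolding lap_def ext_def using lap_exp[OF assms] by (simp add: mult.commute)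

lemma lap_real_eq:
  fixes h :: "real \<Rightarrow> real"
  assumes c: "continuous_on {0..} h" and p: "\<And>x. 0 \<le> x \<Longrightarrow> 0 \<le> h x"
  shows "enn2real (lap h z) = (\<integral>t. exp (- z * t) * ext h t \<partial>lborel)"
proof -
  note [measurable] = ext_meas[OF c]
  show ?thesis unfolding lap_def
    by (rule integral_eq_nn_integral[symmetric]) (use ext_nonneg[OF p] in auto)
qed

lemma fin_enn: "(p::ennreal) \<le> ennreal x \<Longrightarrow> ennreal (enn2real p) = p"
  by (simp add: order_le_less_trans[OF _ ennreal_less_top])

lemma add_le_enn: "(p::ennreal) + q = c \<Longrightarrow> p \<le> c" by (metis add_increasing2 zero_le order_refl)

context setting begin

lemma lam_le: "0 \<le> t \<Longrightarrow> lam t \<le> lam 0" by (rule lam_le0)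

lemma lam_nonneg: "0 \<le> t \<Longrightarrow> 0 \<le> lam t" using lam_pos[of t] by simp

lemma lap_lam_fin: assumes "0 < z" shows "lap lam z \<le> ennreal (lam 0 / z)"
  using lap_bound[OF lam_cont lam_le _ assms] lam0_pos by simp

lemma lap_rho_eq: "lap rho z + lap lam z * lap rho z = lap lam z"
proof -
  have "lap (conv lam rho) z = lap lam z * lap rho z"
    by (rule lap_conv[OF lam_cont rho_cont lam_nonneg rho_nonneg])
  moreover have "lap rho z + lap (conv lam rho) z = lap lam z"
  proof (rule lap_add_eq[OF rho_cont conv_cont[OF lam_cont rho_cont]])
    show "\<And>x. 0 \<le> x \<Longrightarrow> 0 \<le> rho x" by (rule rho_nonneg)
    show "\<And>x. 0 \<le> x \<Longrightarrow> 0 \<le> conv lam rho x" using conv_lam_rho rho_le_lam by simp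
    show "\<And>x. 0 \<le> x \<Longrightarrow> rho x + conv lam rho x = lam x" using conv_lam_rho by simp
  qed
  ultimately show ?thesis by simp
qed

definition LL :: "real \<Rightarrow> real" where "LL z = enn2real (lap lam z)"
definition LP :: "real \<Rightarrow> real" where "LP z = enn2real (lap rho z)"

lemma LL_nonneg: "0 \<le> LL z" unfolding LL_def by simp

lemma lap_lam_real: "0 < z \<Longrightarrow> lap lam z = ennreal (LL z)"
  unfolding LL_def using fin_enn[OF lap_lam_fin, of z] by simp

lemma lap_rho_real: assumes "0 < z" shows "lap rho z = ennreal (LP z)" and "LP z = LL z / (1 + LL z)"
proof -
  have fin: "lap rho z \<le> ennreal (LL z)" using add_le_enn[OF lap_rho_eq[of z]] lap_lam_real[OF assms] by simp
  thus e: "lap rho z = ennreal (LP z)" unfolding LP_def using fin_enn[OF fin] by simp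
  have "ennreal (LP z) + ennreal (LL z) * ennreal (LP z) = ennreal (LL z)"
    using lap_rho_eq[of z] unfolding e lap_lam_real[OF assms] .
  hence "ennreal (LP z + LL z * LP z) = ennreal (LL z)"
    using LL_nonneg by (simp add: LP_def ennreal_mult[symmetric] ennreal_plus[symmetric] del: ennreal_plus)
  hence "LP z + LL z * LP z = LL z"
    using LL_nonneg by (subst (asm) ennreal_inj) (auto simp: LP_def intro!: add_nonneg_nonneg mult_nonneg_nonneg)
  hence "LP z * (1 + LL z) = LL z" by (simp add: algebra_simps)
  moreover have "1 + LL z \<noteq> 0" using LL_nonneg[of z] by linarith
  ultimately show "LP z = LL z / (1 + LL z)" by (simp add: eq_divide_eq)
qed

lemma LP_lt1: "0 < z \<Longrightarrow> LP z < 1"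
  using lap_rho_real(2)[of z] LL_nonneg[of z] by simp

lemma int_rho_le1: assumes t: "0 \<le> t" shows "integral {0..t} rho \<le> 1"
proof -
  define I where "I = integral {0..t} rho"
  have rint: "(rho has_integral I) {0..t}" unfolding I_def
    by (intro integrable_integral integrable_continuous_real cont_sub rho_cont)
  have I0: "I \<ge> 0" unfolding I_def by (rule integral_nonneg) (use rint rho_nonneg in auto)
  have key: "exp (- z * t) * I < 1" if z: "0 < z" for z
  proof -
    have "ennreal (exp (- z * t)) * ennreal I = ennreal (exp (- z * t)) * (\<integral>\<^sup>+ s. ennreal (indicator {0..t} s * rho s) \<partial>lborel)"
      using nn_integral_has_integral_lebesgue[OF _ rint] rho_nonneg by simp
    also have "\<dots> = (\<integral>\<^sup>+ s. ennreal (exp (- z * t)) * ennreal (indicator {0..t} s * rho s) \<partial>lborel)"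
    proof (rule nn_integral_cmult[symmetric])
      have "(\<lambda>s. indicator {0..t} s *\<^sub>R rho s) \<in> borel_measurable borel"
        by (rule borel_measurable_continuous_on_indicator) (auto intro: cont_sub rho_cont)
      thus "(\<lambda>s. ennreal (indicator {0..t} s * rho s)) \<in> borel_measurable lborel" by simp
    qed
    also have "\<dots> \<le> lap rho z" unfolding lap_def
    proof (rule nn_integral_mono)
      fix s
      show "ennreal (exp (- z * t)) * ennreal (indicator {0..t} s * rho s) \<le> ennreal (exp (- z * s) * ext rho s)"
      proof (cases "s \<in> {0..t}")
        case True
        hence "exp (- z * t) \<le> exp (- z * s)" using z by (auto intro: mult_left_mono)
        hence "exp (- z * t) * rho s \<le> exp (- z * s) * rho s"
          using rho_nonneg[of s] True by (intro mult_right_mono) auto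
        thus ?thesis using True rho_nonneg[of s] by (simp add: ext_def ennreal_mult[symmetric] ennreal_leI)
      qed simp
    qed
    also have "\<dots> = ennreal (LP z)" using lap_rho_real(1)[OF z] .
    finally have "ennreal (exp (- z * t) * I) \<le> ennreal (LP z)" using I0 by (simp add: ennreal_mult)
    hence "exp (- z * t) * I \<le> LP z" using LP_lt1[OF z] by (subst (asm) ennreal_le_iff) (auto simp: LP_def)
    thus ?thesis using LP_lt1[OF z] by simp
  qed
  show ?thesis
  proof (rule ccontr)
    assume "\<not> integral {0..t} rho \<le> 1"
    hence I1: "I > 1" unfolding I_def by simp
    hence tp: "t > 0" using t I_def by (cases "t = 0") auto
    define z where "z = ln I / (2 * t)"
    have zp: "z > 0" unfolding z_def using I1 tp by simp
    have "exp (- z * t) * I = exp (- z * t) * exp (ln I)" using I1 by simp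
    also have "\<dots> = exp (ln I - z * t)" by (simp add: exp_add[symmetric])
    also have "ln I - z * t = ln I / 2" unfolding z_def using tp by (simp add: field_simps)
    finally have "exp (- z * t) * I = exp (ln I / 2)" .
    moreover have "exp (ln I / 2) > 1" using I1 by simp
    ultimately show False using key[OF zp] by simp
  qed
qed

lemma r_nonneg: "0 \<le> t \<Longrightarrow> 0 \<le> r t"
  using r_eq1[of t] int_rho_le1[of t] by simp

lemma conv_one_rho: "0 \<le> t \<Longrightarrow> conv (\<lambda>_. 1) rho t = integral {0..t} rho"
  unfolding conv_def by simp

definition LR :: "real \<Rightarrow> real" where "LR z = enn2real (lap r z)"

lemma LR_eq: assumes z: "0 < z" shows "LR z = 1 / (z * (1 + LL z))"
proof -
  have c1: "continuous_on {0..} (\<lambda>_::real. 1::real)" by simp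
  have "lap (conv (\<lambda>_. 1) rho) z = lap (\<lambda>_. 1) z * lap rho z"
    by (rule lap_conv[OF c1 rho_cont]) (use rho_nonneg in auto)
  also have "\<dots> = ennreal (1 / z) * ennreal (LP z)"
    using lap_one[OF z] lap_rho_real(1)[OF z] by simp
  also have "\<dots> = ennreal (1 / z * LP z)"
    using z by (subst ennreal_mult) (auto simp: LP_def)
  also have "1 / z * LP z = LP z / z" by simp
  finally have e1: "lap (conv (\<lambda>_. 1) rho) z = ennreal (LP z / z)" .
  have "lap r z + lap (conv (\<lambda>_. 1) rho) z = lap (\<lambda>_. 1) z"
  proof (rule lap_add_eq[OF r_cont conv_cont[OF c1 rho_cont]])
    show "\<And>x. 0 \<le> x \<Longrightarrow> 0 \<le> r x" by (rule r_nonneg)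
    show "\<And>x. 0 \<le> x \<Longrightarrow> 0 \<le> conv (\<lambda>_. 1) rho x"
      using conv_one_rho r_eq1 r_le1 by fastforce
    show "\<And>x. 0 \<le> x \<Longrightarrow> r x + conv (\<lambda>_. 1) rho x = 1"
      using conv_one_rho r_eq1 by simp
  qed
  hence e2: "lap r z + ennreal (LP z / z) = ennreal (1 / z)" unfolding e1 lap_one[OF z] .
  hence "lap r z \<le> ennreal (1 / z)" by (rule add_le_enn)
  hence fin: "lap r z = ennreal (LR z)" unfolding LR_def using fin_enn by metis
  have LP0: "0 \<le> LP z" unfolding LP_def by simp
  have "ennreal (LR z + LP z / z) = ennreal (1 / z)"
    using e2 unfolding fin using LP0 z by (simp add: LR_def ennreal_plus[symmetric] del: ennreal_plus)
  hence "LR z + LP z / z = 1 / z"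
    using LP0 z by (subst (asm) ennreal_inj) (auto simp: LR_def)
  hence "LR z = (1 - LP z) / z" using z by (simp add: field_simps)
  also have "\<dots> = 1 / (z * (1 + LL z))"
  proof -
    have d: "1 + LL z > 0" using LL_nonneg[of z] by linarith
    have "1 - LP z = 1 / (1 + LL z)" unfolding lap_rho_real(2)[OF z] using d by (simp add: field_simps)
    thus ?thesis by simp
  qed
  finally show ?thesis .
qed

end

context setting begin

lemma ratio_lim: assumes x: "0 < x" shows "((\<lambda>t. lam (x * t) / lam t) \<longlongrightarrow> x powr - \<alpha>) at_top"
proof -
  have "((\<lambda>t. L (x * t) / L t * x powr - \<alpha>) \<longlongrightarrow> 1 * x powr - \<alpha>) at_top"
    by (intro tendsto_mult tendsto_const L_lim x)
  moreover have "eventually (\<lambda>t. L (x * t) / L t * x powr - \<alpha> = lam (x * t) / lam t) at_top"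
    using eventually_gt_at_top[of 0]
  proof eventually_elim
    case (elim t)
    have "lam (x * t) / lam t = (L (x * t) * (x powr - \<alpha> * t powr - \<alpha>)) / (L t * t powr - \<alpha>)"
      using elim x by (simp add: lam_eq powr_mult)
    also have "\<dots> = L (x * t) / L t * x powr - \<alpha>" using elim by (simp add: field_simps)
    finally show ?case by simp
  qed
  ultimately show ?thesis by (simp add: tendsto_cong)
qed

lemma potter_step: assumes "\<alpha> < \<beta>"
  shows "\<exists>T0>0. \<forall>t\<ge>T0. 2 powr - \<beta> * lam t \<le> lam (2 * t)"
proof -
  have "2 powr - \<beta> < 2 powr - \<alpha>" using assms by simp
  hence "eventually (\<lambda>t. lam (2 * t) / lam t > 2 powr - \<beta>) at_top"
    using order_tendstoD(1)[OF ratio_lim[of 2]] by simp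
  then obtain T where T: "\<And>t. t \<ge> T \<Longrightarrow> lam (2 * t) / lam t > 2 powr - \<beta>"
    by (auto simp: eventually_at_top_linorder)
  show ?thesis
  proof (intro exI[of _ "max T 1"] conjI allI impI)
    fix t assume t: "max T 1 \<le> t"
    hence "lam t > 0" using lam_pos by auto
    thus "2 powr - \<beta> * lam t \<le> lam (2 * t)" using T[of t] t by (simp add: field_simps)
  qed simp
qed

lemma potter_iter: assumes T0: "0 < T0" and st: "\<And>t. t \<ge> T0 \<Longrightarrow> 2 powr - \<beta> * lam t \<le> lam (2 * t)"
  and y: "T0 \<le> y" shows "2 powr (- \<beta> * n) * lam y \<le> lam (2 ^ n * y)"
proof (induction n)
  case 0 thus ?case by simp
next
  case (Suc n)
  have ge: "T0 \<le> 2 ^ n * y"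
  proof -
    have "(1::real) \<le> 2 ^ n" by simp
    hence "1 * y \<le> 2 ^ n * y" using y T0 by (intro mult_right_mono) auto
    thus ?thesis using y by simp
  qed
  have "2 powr (- \<beta> * Suc n) * lam y = 2 powr - \<beta> * (2 powr (- \<beta> * n) * lam y)"
    by (simp add: powr_add[symmetric] algebra_simps)
  also have "\<dots> \<le> 2 powr - \<beta> * lam (2 ^ n * y)" using Suc.IH by (intro mult_left_mono) auto
  also have "\<dots> \<le> lam (2 * (2 ^ n * y))" by (rule st[OF ge])
  finally show ?case by (simp add: mult.assoc)
qed

lemma potter: assumes "\<alpha> < \<beta>"
  shows "\<exists>T0>0. \<exists>C>0. \<forall>y w. 0 < y \<longrightarrow> y \<le> w \<longrightarrow> T0 \<le> w \<longrightarrow> lam y \<le> C * (w / y) powr \<beta> * lam w"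
proof -
  have b0: "0 < \<beta>" using assms alpha by simp
  obtain T0 where T0: "T0 > 0" and st: "\<And>t. t \<ge> T0 \<Longrightarrow> 2 powr - \<beta> * lam t \<le> lam (2 * t)"
    using potter_step[OF assms] by auto
  have case1: "lam y \<le> 2 powr \<beta> * (w / y) powr \<beta> * lam w" if y: "T0 \<le> y" "y \<le> w" for y w
  proof -
    have yp: "y > 0" using y T0 by simp
    have q: "w / y \<ge> 1" using y yp by simp
    define n where "n = nat \<lfloor>log 2 (w / y)\<rfloor>"
    have lg: "log 2 (w / y) \<ge> 0" using q by simp
    have n1: "real n \<le> log 2 (w / y)" unfolding n_def using lg by linarith
    have n2: "log 2 (w / y) < real n + 1" unfolding n_def using lg by linarith
    have "2 powr real n \<le> 2 powr log 2 (w / y)" using n1 by simp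
    hence p1: "2 powr real n \<le> w / y" using q by simp
    have "w / y < 2 powr (real n + 1)"
    proof -
      have "2 powr log 2 (w / y) < 2 powr (real n + 1)" using n2 by simp
      thus ?thesis using q by simp
    qed
    moreover have "(2::real) powr (real n + 1) = 2 ^ (n + 1)" using powr_realpow[of 2 "n+1"] by (simp add: add.commute)
    ultimately have "w / y < 2 ^ (n + 1)" by simp
    hence "w < 2 ^ (n + 1) * y" using yp by (simp add: field_simps)
    hence "lam (2 ^ (n + 1) * y) \<le> lam w" using y yp by (intro lam_antimono) auto
    moreover have "2 powr (- \<beta> * (n + 1)) * lam y \<le> lam (2 ^ (n + 1) * y)"
      using potter_iter[OF T0 st y(1), of "n + 1"] by simp
    ultimately have "2 powr (- \<beta> * (n + 1)) * lam y \<le> lam w" by simp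
    hence "2 powr (\<beta> * (n + 1)) * (2 powr (- \<beta> * (n + 1)) * lam y) \<le> 2 powr (\<beta> * (n + 1)) * lam w"
      by (intro mult_left_mono) auto
    moreover have "2 powr (\<beta> * (n + 1)) * (2 powr (- \<beta> * (n + 1)) * lam y) = lam y"
    proof -
      have e: "(2::real) powr x * 2 powr (- x) = 1" for x by (simp add: powr_minus)
      have "2 powr (\<beta> * (n + 1)) * (2 powr (- \<beta> * (n + 1)) * lam y)
          = (2 powr (\<beta> * (n + 1)) * 2 powr (- (\<beta> * (n + 1)))) * lam y" by (simp add: mult.assoc)
      thus ?thesis unfolding e by simp
    qed
    ultimately have "lam y \<le> 2 powr (\<beta> * (n + 1)) * lam w" by linarith
    also have "2 powr (\<beta> * (n + 1)) = 2 powr \<beta> * (2 powr real n) powr \<beta>"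
      by (simp add: powr_powr powr_add[symmetric] algebra_simps)
    also have "(2 powr real n) powr \<beta> \<le> (w / y) powr \<beta>" using p1 b0 by (intro powr_mono2) auto
    finally show ?thesis using lam_pos[of w] y yp by (simp add: mult_right_mono mult_left_mono)
  qed
  define C where "C = 2 powr \<beta> * lam 0 / lam T0"
  have lT0: "lam T0 > 0" "lam T0 \<le> lam 0" using lam_pos lam_le0 T0 by auto
  have C1: "C \<ge> 2 powr \<beta>" unfolding C_def using lT0 by (simp add: field_simps)
  have Cp: "C > 0" unfolding C_def using lT0 lam0_pos by simp
  have main: "lam y \<le> C * (w / y) powr \<beta> * lam w" if yw: "0 < y" "y \<le> w" "T0 \<le> w" for y w
    proof (cases "T0 \<le> y")
      case True
      have "lam y \<le> 2 powr \<beta> * (w / y) powr \<beta> * lam w" by (rule case1[OF True yw(2)])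
      also have "\<dots> \<le> C * (w / y) powr \<beta> * lam w"
        using C1 lam_pos[of w] yw by (intro mult_right_mono) auto
      finally show ?thesis .
    next
      case False
      have "lam y \<le> lam 0" using yw lam_le0 by auto
      also have "\<dots> = (lam 0 / lam T0) * lam T0" using lT0 by simp
      also have "\<dots> \<le> (lam 0 / lam T0) * (2 powr \<beta> * (w / T0) powr \<beta> * lam w)"
        using case1[of T0 w] yw lT0 lam0_pos by (intro mult_left_mono) auto
      also have "(w / T0) powr \<beta> \<le> (w / y) powr \<beta>"
        using False yw T0 b0 by (intro powr_mono2) (auto simp: frac_le)
      hence "(lam 0 / lam T0) * (2 powr \<beta> * (w / T0) powr \<beta> * lam w) \<le> (lam 0 / lam T0) * (2 powr \<beta> * (w / y) powr \<beta> * lam w)"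
        using lT0 lam0_pos lam_pos[of w] yw by (intro mult_left_mono mult_right_mono) auto
      also have "\<dots> = C * (w / y) powr \<beta> * lam w" unfolding C_def by simp
      finally show ?thesis .
    qed
  show ?thesis using main Cp T0 by blast
qed

end

lemma my_powr_at_top:
  assumes "(p::real) > 0"
  shows   "filterlim (\<lambda>x. x powr p) at_top at_top"
proof (subst filterlim_cong[OF refl refl])
  show "LIM x at_top. exp (p * ln x) :> at_top"
    by (rule filterlim_compose[OF exp_at_top filterlim_tendsto_pos_mult_at_top[OF tendsto_const]])
       (simp_all add: ln_at_top assms)
  show "eventually (\<lambda>x. x powr p = exp (p * ln x)) at_top"
    using eventually_gt_at_top[of 0] by eventually_elim (simp add: powr_def)
qed

context setting begin

lemma lam_to_0: "(lam \<longlongrightarrow> 0) at_top"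
proof -
  define q where "q = (1 + 2 powr - \<alpha>) / 2"
  have a2: "2 powr - \<alpha> < 1" using alpha powr_less_mono[of "- \<alpha>" 0 2] by simp
  have q: "2 powr - \<alpha> < q" "q < 1" "0 < q" proof -
    have p: "0 < (2::real) powr - \<alpha>" by simp
    show "2 powr - \<alpha> < q" unfolding q_def using a2 p by (simp add: field_simps)
    show "q < 1" unfolding q_def using a2 p by (simp add: field_simps)
    show "0 < q" unfolding q_def using p by (simp add: add_pos_pos)
  qed
  have "eventually (\<lambda>t. lam (2 * t) / lam t < q) at_top"
    using order_tendstoD(2)[OF ratio_lim[of 2] q(1)] by simp
  then obtain T' where T': "\<And>t. t \<ge> T' \<Longrightarrow> lam (2 * t) / lam t < q"
    by (auto simp: eventually_at_top_linorder)
  define T where "T = max T' 1"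
  have T: "T \<ge> 1" "T \<ge> T'" unfolding T_def by auto
  have st: "lam (2 * t) \<le> q * lam t" if "t \<ge> T" for t
  proof -
    have "lam t > 0" using lam_pos that T by auto
    thus ?thesis using T'[of t] that T by (simp add: field_simps)
  qed
  have it: "lam (2 ^ n * T) \<le> q ^ n * lam T" for n
  proof (induction n)
    case (Suc n)
    have "T \<le> 2 ^ n * T"
    proof -
      have "(1::real) \<le> 2 ^ n" by simp
      thus ?thesis using T by (metis mult_1 mult_right_mono order_trans zero_le_one)
    qed
    hence "lam (2 * (2 ^ n * T)) \<le> q * lam (2 ^ n * T)" by (rule st)
    also have "\<dots> \<le> q * (q ^ n * lam T)" using Suc.IH q by (intro mult_left_mono) auto
    finally show ?case by (simp add: mult.assoc)
  qed simp
  show ?thesis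
  proof (rule order_tendstoI)
    fix e :: real assume e: "e < 0"
    show "eventually (\<lambda>t. e < lam t) at_top"
      using eventually_ge_at_top[of 0]
    proof eventually_elim
      case (elim t) thus ?case using lam_pos[of t] e by simp
    qed
  next
    fix e :: real assume e: "0 < e"
    have lT: "lam T > 0" using lam_pos T by auto
    obtain n where n: "q ^ n < e / lam T" using real_arch_pow_inv[of "e / lam T" q] e lT q by auto
    show "eventually (\<lambda>t. lam t < e) at_top"
      using eventually_ge_at_top[of "2 ^ n * T"]
    proof eventually_elim
      case (elim t)
      have "0 \<le> 2 ^ n * T" using T by simp
      hence "lam t \<le> lam (2 ^ n * T)" using elim by (intro lam_antimono) auto
      also have "\<dots> \<le> q ^ n * lam T" by (rule it)
      also have "\<dots> < e" using n lT by (simp add: field_simps)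
      finally show ?case .
    qed
  qed
qed

lemma tlam_inf: "filterlim (\<lambda>t. t * lam t) at_top at_top"
proof -
  define \<beta> where "\<beta> = (1 + \<alpha>) / 2"
  have b: "\<alpha> < \<beta>" "\<beta> < 1" "0 < \<beta>" unfolding \<beta>_def using alpha by auto
  obtain T0 C where T0: "T0 > 0" and C: "C > 0"
    and P: "\<And>y w. 0 < y \<Longrightarrow> y \<le> w \<Longrightarrow> T0 \<le> w \<Longrightarrow> lam y \<le> C * (w / y) powr \<beta> * lam w"
    using potter[OF b(1)] by blast
  define c where "c = lam T0 * T0 powr \<beta> / C"
  have c: "c > 0" unfolding c_def using lam_pos T0 C by auto
  have "filterlim (\<lambda>t. c * t powr (1 - \<beta>)) at_top at_top"
    by (rule filterlim_tendsto_pos_mult_at_top[OF tendsto_const c my_powr_at_top]) (use b in auto)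
  moreover have "eventually (\<lambda>t. c * t powr (1 - \<beta>) \<le> t * lam t) at_top"
    using eventually_ge_at_top[of T0]
  proof eventually_elim
    case (elim t)
    have tp: "t > 0" using elim T0 by simp
    have "lam T0 \<le> C * (t / T0) powr \<beta> * lam t" by (rule P) (use T0 elim in auto)
    hence "lam T0 \<le> C * (t powr \<beta> / T0 powr \<beta>) * lam t" using tp T0 by (simp add: powr_divide)
    hence "lam T0 * T0 powr \<beta> / C \<le> t powr \<beta> * lam t" using C T0 by (simp add: field_simps)
    hence "c * t powr (1 - \<beta>) \<le> t powr \<beta> * lam t * t powr (1 - \<beta>)"
      unfolding c_def by (intro mult_right_mono) auto
    also have "\<dots> = t * lam t" using tp by (simp add: powr_add[symmetric] algebra_simps)
    finally show ?case .
  qed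
  ultimately show ?thesis by (rule filterlim_at_top_mono)
qed

end

lemma gamma_lint: fixes c :: real assumes c: "0 < c"
  shows "integrable lborel (\<lambda>x::real. indicator {0..} x * (x powr (c - 1) / exp x))"
    and "(\<integral>x. indicator {0..} x * (x powr (c - 1) / exp x) \<partial>lborel) = Gamma c"
proof -
  have nn: "(\<integral>\<^sup>+ x. ennreal (indicator {0..} (x::real) * (x powr (c - 1) / exp x)) \<partial>lborel) = ennreal (Gamma c)"
    by (rule nn_integral_has_integral_lebesgue[OF _ Gamma_integral_real[OF c]]) auto
  show "integrable lborel (\<lambda>x::real. indicator {0..} x * (x powr (c - 1) / exp x))"
  proof -
    have "(\<integral>\<^sup>+ x. ennreal (indicator {0..} (x::real) * (x powr (c - 1) / exp x)) \<partial>lborel) < \<infinity>" unfolding nn by simp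
    thus ?thesis by (intro integrableI_nonneg) auto
  qed
  show "(\<integral>x. indicator {0..} x * (x powr (c - 1) / exp x) \<partial>lborel) = Gamma c"
  proof -
    have "(\<integral>x. indicator {0..} x * (x powr (c - 1) / exp x) \<partial>lborel)
        = enn2real (\<integral>\<^sup>+ x. ennreal (indicator {0..} (x::real) * (x powr (c - 1) / exp x)) \<partial>lborel)"
      by (rule integral_eq_nn_integral) auto
    also have "\<dots> = Gamma c" unfolding nn using Gamma_real_nonneg[OF c] by simp
    finally show ?thesis .
  qed
qed

lemma exp_lint: "integrable lborel (\<lambda>x::real. indicator {0..} x * exp (- x))"
proof -
  have nn: "(\<integral>\<^sup>+ x. ennreal (indicator {0..} (x::real) * exp (- 1 * x)) \<partial>lborel) = ennreal (exp (- 1 * 0) / 1)"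
    by (rule nn_integral_has_integral_lebesgue[OF _ has_integral_exp_minus_to_infinity]) auto
  have "(\<integral>\<^sup>+ x. ennreal (indicator {0..} (x::real) * exp (- 1 * x)) \<partial>lborel) < \<infinity>" unfolding nn by simp
  thus ?thesis by (intro integrableI_nonneg) auto
qed

context setting begin

lemma LL_integral: assumes t: "0 < t"
  shows "LL (1 / t) = t * (\<integral>x. exp (- x) * ext lam (t * x) \<partial>lborel)"
proof -
  have "LL (1 / t) = (\<integral>u. exp (- (1 / t) * u) * ext lam u \<partial>lborel)"
    unfolding LL_def by (rule lap_real_eq[OF lam_cont lam_nonneg])
  also have "\<dots> = \<bar>t\<bar> *\<^sub>R (\<integral>x. exp (- (1 / t) * (0 + t * x)) * ext lam (0 + t * x) \<partial>lborel)"
    by (rule lborel_integral_real_affine) (use t in auto)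
  also have "\<dots> = t * (\<integral>x. exp (- x) * ext lam (t * x) \<partial>lborel)"
    using t by simp
  finally show ?thesis .
qed

lemma abel: "((\<lambda>t. LL (1 / t) / (t * lam t)) \<longlongrightarrow> Gamma (1 - \<alpha>)) at_top"
proof -
  note [measurable] = ext_meas[OF lam_cont]
  define \<beta> where "\<beta> = (1 + \<alpha>) / 2"
  have b: "\<alpha> < \<beta>" "\<beta> < 1" "0 < \<beta>" unfolding \<beta>_def using alpha by auto
  obtain T0 C where T0: "T0 > 0" and C: "C > 0"
    and P: "\<And>y w. 0 < y \<Longrightarrow> y \<le> w \<Longrightarrow> T0 \<le> w \<Longrightarrow> lam y \<le> C * (w / y) powr \<beta> * lam w"
    using potter[OF b(1)] by blast
  define s where "s t x = exp (- x) * ext lam (t * x) / lam t" for t x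
  define f where "f x = indicator {0..} x * (x powr ((1 - \<alpha>) - 1) / exp x)" for x :: real
  define w where "w x = C * (indicator {0..} x * (x powr ((1 - \<beta>) - 1) / exp x)) + indicator {0..} x * exp (- x)" for x :: real
  have fm: "f \<in> borel_measurable lborel" unfolding f_def by measurable
  have sm: "s t \<in> borel_measurable lborel" for t unfolding s_def by measurable
  have wi: "integrable lborel w" unfolding w_def
  proof (intro Bochner_Integration.integrable_add Bochner_Integration.integrable_mult_right exp_lint)
    show "integrable lborel (\<lambda>x. indicator {0..} x * (x powr (1 - \<beta> - 1) / exp x))"
      by (rule gamma_lint(1)) (use b in auto)
  qed
  have lim: "AE x in lborel. ((\<lambda>t. s t x) \<longlongrightarrow> f x) at_top"
    using AE_lborel_singleton[of 0]
  proof eventually_elim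
    case (elim x)
    show ?case
    proof (cases "x > 0")
      case True
      have "((\<lambda>t. exp (- x) * (lam (x * t) / lam t)) \<longlongrightarrow> exp (- x) * x powr - \<alpha>) at_top"
        by (intro tendsto_mult tendsto_const ratio_lim True)
      moreover have "eventually (\<lambda>t. exp (- x) * (lam (x * t) / lam t) = s t x) at_top"
        using eventually_gt_at_top[of 0]
        by eventually_elim (use True in \<open>simp add: s_def ext_def mult.commute\<close>)
      moreover have "exp (- x) * x powr - \<alpha> = f x" using True unfolding f_def by (simp add: exp_minus field_simps)
      ultimately show ?thesis by (simp add: tendsto_cong)
    next
      case False
      hence xn: "x < 0" using elim by simp
      have "eventually (\<lambda>t. 0 = s t x) at_top"
        using eventually_gt_at_top[of 0]
      proof eventually_elim
        case (elim t)
        have "t * x < 0" using elim xn by (simp add: mult_pos_neg)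
        thus ?case unfolding s_def ext_def by simp
      qed
      moreover have "f x = 0" unfolding f_def using xn by simp
      ultimately show ?thesis by (simp add: tendsto_cong)
    qed
  qed
  have bound: "\<forall>\<^sub>F t in at_top. AE x in lborel. norm (s t x) \<le> w x"
    using eventually_ge_at_top[of T0]
  proof eventually_elim
    case (elim t)
    have tp: "t > 0" using elim T0 by simp
    have lt: "lam t > 0" using lam_pos tp by simp
    have tT0: "T0 \<le> t" using elim by simp
    show ?case using AE_lborel_singleton[of 0]
    proof eventually_elim
      case (elim x)
      show ?case
      proof (cases "x > 0")
        case False
        hence "x < 0" using elim by simp
        hence "t * x < 0" using tp by (simp add: mult_pos_neg)
        thus ?thesis unfolding s_def w_def ext_def using \<open>x < 0\<close> by simp
      next
        case True
        have txp: "t * x > 0" using tp True by simp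
        have ratio: "lam (t * x) / lam t \<le> C * x powr - \<beta> + 1"
        proof (cases "x \<ge> 1")
          case True
          hence "t \<le> t * x" using tp by simp
          hence "lam (t * x) \<le> lam t" using tp by (intro lam_antimono) auto
          hence "lam (t * x) / lam t \<le> 1" using lt by simp
          moreover have "0 \<le> C * x powr - \<beta>" using C by simp
          ultimately show ?thesis by linarith
        next
          case False
          hence "t * x \<le> t" using tp \<open>x > 0\<close> by simp
          hence "lam (t * x) \<le> C * (t / (t * x)) powr \<beta> * lam t" using P[of "t * x" t] txp tT0 by simp
          also have "t / (t * x) = 1 / x" using tp by simp
          also have "(1 / x) powr \<beta> = x powr - \<beta>" using \<open>x > 0\<close> by (simp add: powr_minus_divide powr_divide)
          finally have "lam (t * x) / lam t \<le> C * x powr - \<beta>" using lt by (simp add: field_simps)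
          thus ?thesis by linarith
        qed
        have "norm (s t x) = exp (- x) * (lam (t * x) / lam t)"
          unfolding s_def ext_def using txp lt lam_pos[of "t * x"] by simp
        also have "\<dots> \<le> exp (- x) * (C * x powr - \<beta> + 1)" using ratio by (intro mult_left_mono) auto
        also have "\<dots> = w x" unfolding w_def using True by (simp add: exp_minus field_simps)
        finally show ?thesis .
      qed
    qed
  qed
  have dc: "((\<lambda>t. \<integral>x. s t x \<partial>lborel) \<longlongrightarrow> (\<integral>x. f x \<partial>lborel)) at_top"
    by (rule integral_dominated_convergence_at_top[OF fm sm wi lim bound])
  have If: "(\<integral>x. f x \<partial>lborel) = Gamma (1 - \<alpha>)" unfolding f_def by (rule gamma_lint(2)) (use alpha in auto)
  have "eventually (\<lambda>t. (\<integral>x. s t x \<partial>lborel) = LL (1 / t) / (t * lam t)) at_top"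
    using eventually_gt_at_top[of 0]
  proof eventually_elim
    case (elim t)
    have "(\<integral>x. s t x \<partial>lborel) = (\<integral>x. exp (- x) * ext lam (t * x) \<partial>lborel) / lam t"
      unfolding s_def by simp
    also have "\<dots> = LL (1 / t) / (t * lam t)" using LL_integral[OF elim] elim by simp
    finally show ?case .
  qed
  with dc show ?thesis unfolding If by (simp add: tendsto_cong)
qed

end

context setting begin

lemma LR_lim: assumes s: "0 < s"
  shows "((\<lambda>t. LR (s / t) * lam t) \<longlongrightarrow> s powr - \<alpha> / Gamma (1 - \<alpha>)) at_top"
proof -
  define x where "x = inverse s"
  have x: "0 < x" unfolding x_def using s by simp
  have tau: "filterlim (\<lambda>t. x * t) at_top at_top"
    by (rule filterlim_tendsto_pos_mult_at_top[OF tendsto_const x filterlim_ident])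
  have A1: "((\<lambda>t. LL (1 / (x * t)) / ((x * t) * lam (x * t))) \<longlongrightarrow> Gamma (1 - \<alpha>)) at_top"
    using filterlim_compose[OF abel tau] by (simp add: o_def)
  have A2: "((\<lambda>t. inverse ((x * t) * lam (x * t))) \<longlongrightarrow> 0) at_top"
    by (rule tendsto_inverse_0_at_top) (use filterlim_compose[OF tlam_inf tau] in \<open>simp add: o_def\<close>)
  have A3: "((\<lambda>t. lam (x * t) / lam t) \<longlongrightarrow> x powr - \<alpha>) at_top" by (rule ratio_lim[OF x])
  have G: "Gamma (1 - \<alpha>) > 0" using alpha by simp
  have xp: "x powr - \<alpha> > 0" using x by simp
  have D: "((\<lambda>t. inverse ((x * t) * lam (x * t)) * (lam (x * t) / lam t)
       + LL (1 / (x * t)) / ((x * t) * lam (x * t)) * (lam (x * t) / lam t))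
       \<longlongrightarrow> 0 * x powr - \<alpha> + Gamma (1 - \<alpha>) * x powr - \<alpha>) at_top"
    by (intro tendsto_intros A1 A2 A3)
  have D': "((\<lambda>t. 1 / (inverse ((x * t) * lam (x * t)) * (lam (x * t) / lam t)
       + LL (1 / (x * t)) / ((x * t) * lam (x * t)) * (lam (x * t) / lam t)))
       \<longlongrightarrow> 1 / (0 * x powr - \<alpha> + Gamma (1 - \<alpha>) * x powr - \<alpha>)) at_top"
    by (rule tendsto_divide[OF tendsto_const D]) (use G xp in simp)
  have eq: "eventually (\<lambda>t. 1 / (inverse ((x * t) * lam (x * t)) * (lam (x * t) / lam t)
       + LL (1 / (x * t)) / ((x * t) * lam (x * t)) * (lam (x * t) / lam t)) = LR (s / t) * lam t) at_top"
    using eventually_gt_at_top[of 0]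
  proof eventually_elim
    case (elim t)
    have p1: "lam (x * t) > 0" "lam t > 0" using lam_pos x elim by auto
    have st: "s / t = 1 / (x * t)" unfolding x_def using s elim by (simp add: field_simps)
    have LLn: "LL (1 / (x * t)) \<ge> 0" by (rule LL_nonneg)
    have "LR (s / t) * lam t = lam t / ((1 / (x * t)) * (1 + LL (1 / (x * t))))"
      unfolding st using LR_eq[of "1 / (x * t)"] x elim by simp
    also have "\<dots> = 1 / (inverse ((x * t) * lam (x * t)) * (lam (x * t) / lam t)
       + LL (1 / (x * t)) / ((x * t) * lam (x * t)) * (lam (x * t) / lam t))"
      using p1 x elim LLn by (simp add: field_simps)
    finally show ?case by simp
  qed
  have lim: "1 / (0 * x powr - \<alpha> + Gamma (1 - \<alpha>) * x powr - \<alpha>) = s powr - \<alpha> / Gamma (1 - \<alpha>)"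
  proof -
    have e: "x powr - \<alpha> = s powr \<alpha>"
    proof -
      have "x powr - \<alpha> = inverse (x powr \<alpha>)" by (simp add: powr_minus)
      also have "x powr \<alpha> = 1 / s powr \<alpha>" unfolding x_def using s
        by (simp add: powr_divide inverse_eq_divide)
      finally show ?thesis by simp
    qed
    show ?thesis unfolding e using s by (simp add: powr_minus field_simps)
  qed
  show ?thesis using tendsto_cong[OF eq] D' unfolding lim by simp
qed

definition Kf :: "(real \<Rightarrow> real) \<Rightarrow> real \<Rightarrow> real" where
  "Kf \<phi> t = lam t * (\<integral>u. ext r u * \<phi> (u / t) \<partial>lborel)"

lemma LR_int: "LR z = (\<integral>u. exp (- z * u) * ext r u \<partial>lborel)"
  unfolding LR_def by (rule lap_real_eq[OF r_cont r_nonneg])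

lemma K_exp: assumes m: "0 < m"
  shows "((\<lambda>t. Kf (\<lambda>v. exp (- m * v)) t) \<longlongrightarrow> m powr - \<alpha> / Gamma (1 - \<alpha>)) at_top"
proof -
  have "eventually (\<lambda>t. LR (m / t) * lam t = Kf (\<lambda>v. exp (- m * v)) t) at_top"
    using eventually_gt_at_top[of 0]
  proof eventually_elim
    case (elim t)
    have "(\<lambda>u. exp (- (m / t) * u) * ext r u) = (\<lambda>u. ext r u * exp (- m * (u / t)))"
      by (rule ext) (simp add: mult.commute)
    thus ?case unfolding Kf_def LR_int by simp
  qed
  thus ?thesis using LR_lim[OF m] by (simp add: tendsto_cong)
qed

end

definition phiP :: "(nat \<Rightarrow> real) \<Rightarrow> nat \<Rightarrow> real \<Rightarrow> real" where
  "phiP a n v = (\<Sum>i\<le>n. a i * exp (- (real i + 1) * v))"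

lemma exp_lint_k: assumes m: "0 < m" shows "integrable lborel (\<lambda>x::real. indicator {0..} x * exp (- m * x))"
proof -
  have nn: "(\<integral>\<^sup>+ x. ennreal (indicator {0..} (x::real) * exp (- m * x)) \<partial>lborel) = ennreal (exp (- m * 0) / m)"
    by (rule nn_integral_has_integral_lebesgue[OF _ has_integral_exp_minus_to_infinity[OF m]]) auto
  have "(\<integral>\<^sup>+ x. ennreal (indicator {0..} (x::real) * exp (- m * x)) \<partial>lborel) < \<infinity>" unfolding nn by simp
  thus ?thesis by (intro integrableI_nonneg) auto
qed

context setting begin

lemma ext_r_bound: "\<bar>ext r u\<bar> \<le> indicator {0..} u"
  unfolding ext_def using r_nonneg r_le1 by (auto split: split_indicator)

lemma K_term_int: assumes t: "0 < t" and m: "0 < m"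
  shows "integrable lborel (\<lambda>u. ext r u * exp (- m * (u / t)))"
proof (rule Bochner_Integration.integrable_bound[OF exp_lint_k[of "m / t"]])
  note [measurable] = ext_meas[OF r_cont]
  show "0 < m / t" using t m by simp
  show "(\<lambda>u. ext r u * exp (- m * (u / t))) \<in> borel_measurable lborel" by measurable
  show "AE x in lborel. norm (ext r x * exp (- m * (x / t))) \<le> norm (indicator {0..} x * exp (- (m / t) * x))"
    using ext_r_bound by (auto simp: abs_mult split: split_indicator)
qed

lemma K_poly: "((\<lambda>t. Kf (phiP cf n) t) \<longlongrightarrow> (\<Sum>i\<le>n. cf i * ((real i + 1) powr - \<alpha> / Gamma (1 - \<alpha>)))) at_top"
proof -
  have "((\<lambda>t. \<Sum>i\<le>n. cf i * Kf (\<lambda>v. exp (- (real i + 1) * v)) t) \<longlongrightarrow> (\<Sum>i\<le>n. cf i * ((real i + 1) powr - \<alpha> / Gamma (1 - \<alpha>)))) at_top"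
    by (intro tendsto_sum tendsto_mult_left K_exp) auto
  moreover have "eventually (\<lambda>t. (\<Sum>i\<le>n. cf i * Kf (\<lambda>v. exp (- (real i + 1) * v)) t) = Kf (phiP cf n) t) at_top"
    using eventually_gt_at_top[of 0]
  proof eventually_elim
    case (elim t)
    have "(\<integral>u. ext r u * phiP cf n (u / t) \<partial>lborel) = (\<integral>u. (\<Sum>i\<le>n. cf i * (ext r u * exp (- (real i + 1) * (u / t)))) \<partial>lborel)"
      unfolding phiP_def by (simp add: sum_distrib_left algebra_simps)
    also have "\<dots> = (\<Sum>i\<le>n. (\<integral>u. cf i * (ext r u * exp (- (real i + 1) * (u / t))) \<partial>lborel))"
      by (rule Bochner_Integration.integral_sum) (intro Bochner_Integration.integrable_mult_right K_term_int elim, simp)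
    also have "\<dots> = (\<Sum>i\<le>n. cf i * (\<integral>u. ext r u * exp (- (real i + 1) * (u / t)) \<partial>lborel))"
      by simp
    finally show ?case unfolding Kf_def by (simp add: sum_distrib_left algebra_simps)
  qed
  ultimately show ?thesis by (simp add: tendsto_cong)
qed

lemma nu_exp: assumes m: "0 < m"
  shows "integrable lborel (\<lambda>v. indicator {0..} v * exp (- m * v) * v powr (\<alpha> - 1))"
    and "(\<integral>v. indicator {0..} v * exp (- m * v) * v powr (\<alpha> - 1) \<partial>lborel) = Gamma \<alpha> * m powr - \<alpha>"
proof -
  define f where "f v = indicator {0..} v * exp (- m * v) * v powr (\<alpha> - 1)" for v :: real
  define g where "g u = indicator {0..} u * (u powr (\<alpha> - 1) / exp u)" for u :: real
  have eq: "f (0 + (1 / m) * u) = m powr (1 - \<alpha>) * g u" for u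
  proof (cases "u \<ge> 0")
    case True
    have "(u / m) powr (\<alpha> - 1) = u powr (\<alpha> - 1) / m powr (\<alpha> - 1)" using True m by (simp add: powr_divide)
    also have "\<dots> = u powr (\<alpha> - 1) * (1 / m powr (\<alpha> - 1))" by simp
    also have "1 / m powr (\<alpha> - 1) = m powr (1 - \<alpha>)" using m by (simp add: powr_minus[symmetric] inverse_eq_divide[symmetric])
    finally have pw: "(u / m) powr (\<alpha> - 1) = m powr (1 - \<alpha>) * u powr (\<alpha> - 1)" by simp
    show ?thesis unfolding f_def g_def using True m pw unfolding f_def g_def using True m by (simp add: exp_minus field_simps)
  next
    case False
    hence "u / m < 0" using m by (simp add: divide_neg_pos)
    thus ?thesis unfolding f_def g_def using False by simp
  qed
  have gi: "integrable lborel g" unfolding g_def by (rule gamma_lint(1)) (use alpha in auto)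
  have gI: "(\<integral>u. g u \<partial>lborel) = Gamma \<alpha>" unfolding g_def by (rule gamma_lint(2)) (use alpha in auto)
  have "integrable lborel (\<lambda>u. f (0 + (1 / m) * u))" unfolding eq using gi by simp
  thus fi: "integrable lborel (\<lambda>v. indicator {0..} v * exp (- m * v) * v powr (\<alpha> - 1))"
    using lborel_integrable_real_affine_iff[of "1 / m" f 0] m unfolding f_def by simp
  have "(\<integral>v. f v \<partial>lborel) = \<bar>1 / m\<bar> *\<^sub>R (\<integral>u. f (0 + (1 / m) * u) \<partial>lborel)"
    by (rule lborel_integral_real_affine) (use m in auto)
  also have "\<dots> = (1 / m) * (m powr (1 - \<alpha>) * Gamma \<alpha>)" unfolding eq using m gI by simp
  also have "\<dots> = Gamma \<alpha> * m powr - \<alpha>"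
  proof -
    have "(1 / m) * m powr (1 - \<alpha>) = m powr - \<alpha>" using m
      by (simp add: powr_diff powr_minus divide_inverse)
    thus ?thesis by (simp add: algebra_simps)
  qed
  finally show "(\<integral>v. indicator {0..} v * exp (- m * v) * v powr (\<alpha> - 1) \<partial>lborel) = Gamma \<alpha> * m powr - \<alpha>"
    unfolding f_def .
qed

lemma nu_phiP:
  shows "integrable lborel (\<lambda>v. indicator {0..} v * phiP cf n v * v powr (\<alpha> - 1))"
    and "(\<integral>v. indicator {0..} v * phiP cf n v * v powr (\<alpha> - 1) \<partial>lborel) = Gamma \<alpha> * (\<Sum>i\<le>n. cf i * (real i + 1) powr - \<alpha>)"
proof -
  have e: "(\<lambda>v. indicator {0..} v * phiP cf n v * v powr (\<alpha> - 1))
      = (\<lambda>v. \<Sum>i\<le>n. cf i * (indicator {0..} v * exp (- (real i + 1) * v) * v powr (\<alpha> - 1)))"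
    unfolding phiP_def by (rule ext) (simp add: sum_distrib_left sum_distrib_right algebra_simps)
  have ii: "integrable lborel (\<lambda>v. cf i * (indicator {0..} v * exp (- (real i + 1) * v) * v powr (\<alpha> - 1)))" for i
    by (intro Bochner_Integration.integrable_mult_right nu_exp(1)) auto
  show "integrable lborel (\<lambda>v. indicator {0..} v * phiP cf n v * v powr (\<alpha> - 1))"
    unfolding e using ii by (intro Bochner_Integration.integrable_sum) auto
  show "(\<integral>v. indicator {0..} v * phiP cf n v * v powr (\<alpha> - 1) \<partial>lborel) = Gamma \<alpha> * (\<Sum>i\<le>n. cf i * (real i + 1) powr - \<alpha>)"
  proof -
    have "(\<integral>v. (\<Sum>i\<le>n. cf i * (indicator {0..} v * exp (- (real i + 1) * v) * v powr (\<alpha> - 1))) \<partial>lborel)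
        = (\<Sum>i\<le>n. (\<integral>v. cf i * (indicator {0..} v * exp (- (real i + 1) * v) * v powr (\<alpha> - 1)) \<partial>lborel))"
      by (rule Bochner_Integration.integral_sum) (rule ii)
    also have "\<dots> = (\<Sum>i\<le>n. cf i * (Gamma \<alpha> * (real i + 1) powr - \<alpha>))"
    proof (rule sum.cong[OF refl])
      fix i assume "i \<in> {..n}"
      have "(real i + 1) > 0" by simp
      from nu_exp(2)[OF this] show "(\<integral>v. cf i * (indicator {0..} v * exp (- (real i + 1) * v) * v powr (\<alpha> - 1)) \<partial>lborel)
          = cf i * (Gamma \<alpha> * (real i + 1) powr - \<alpha>)" by simp
    qed
    finally show ?thesis unfolding e by (simp add: sum_distrib_left algebra_simps)
  qed
qed

lemma nu_one:
  shows "integrable lborel (\<lambda>v. indicator {0..} v * indicator {..1} v * v powr (\<alpha> - 1))"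
    and "(\<integral>v. indicator {0..} v * indicator {..1} v * v powr (\<alpha> - 1) \<partial>lborel) = 1 / \<alpha>"
proof -
  have hi: "((\<lambda>x. x powr (\<alpha> - 1)) has_integral (1 powr (\<alpha> - 1 + 1) / (\<alpha> - 1 + 1))) {0..1}"
    by (rule has_integral_powr_from_0) (use alpha in auto)
  have nn: "(\<integral>\<^sup>+ x. ennreal (indicator {0..1} x * x powr (\<alpha> - 1)) \<partial>lborel) = ennreal (1 / \<alpha>)"
    using nn_integral_has_integral_lebesgue[OF _ hi] by simp
  have ind: "indicator {0..} v * indicator {..1} v = (indicator {0..1} v :: real)" for v :: real
    by (auto split: split_indicator)
  have "(\<integral>\<^sup>+ x. ennreal (indicator {0..1} x * x powr (\<alpha> - 1)) \<partial>lborel) < \<infinity>" unfolding nn by simp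
  hence i1: "integrable lborel (\<lambda>x. indicator {0..1} x * x powr (\<alpha> - 1))"
    by (intro integrableI_nonneg) auto
  thus "integrable lborel (\<lambda>v. indicator {0..} v * indicator {..1} v * v powr (\<alpha> - 1))"
    unfolding ind .
  have "(\<integral>x. indicator {0..1} x * x powr (\<alpha> - 1) \<partial>lborel) = enn2real (\<integral>\<^sup>+ x. ennreal (indicator {0..1} x * x powr (\<alpha> - 1)) \<partial>lborel)"
    by (rule integral_eq_nn_integral) auto
  also have "\<dots> = 1 / \<alpha>" unfolding nn using alpha by simp
  finally show "(\<integral>v. indicator {0..} v * indicator {..1} v * v powr (\<alpha> - 1) \<partial>lborel) = 1 / \<alpha>"
    unfolding ind .
qed

end

lemma poly_approx_above:
  fixes h :: "real \<Rightarrow> real"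
  assumes c: "continuous_on {0..1} h" and d: "0 < d"
  shows "\<exists>cf n. \<forall>y\<in>{0..1}. h y \<le> (\<Sum>i\<le>n. cf i * y ^ i) \<and> (\<Sum>i\<le>n. cf i * y ^ i) \<le> h y + 2 * d"
proof -
  obtain g where g: "real_polynomial_function g" and gh: "\<And>y. y \<in> {0..1} \<Longrightarrow> \<bar>h y - g y\<bar> < d"
    using Stone_Weierstrass_real_polynomial_function[OF compact_Icc c d] by blast
  obtain a n where gs: "g = (\<lambda>x. \<Sum>i\<le>n. a i * x ^ i)" using g real_polynomial_function_iff_sum by blast
  define cf where "cf i = a i + (if i = 0 then d else 0)" for i
  have e: "(\<Sum>i\<le>n. cf i * y ^ i) = g y + d" for y
  proof -
    have "(\<Sum>i\<le>n. cf i * y ^ i) = (\<Sum>i\<le>n. a i * y ^ i) + (\<Sum>i\<le>n. (if i = 0 then d else 0) * y ^ i)"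
      unfolding cf_def by (simp add: sum.distrib algebra_simps)
    also have "(\<Sum>i\<le>n. (if i = 0 then d else 0) * y ^ i) = d"
    proof -
      have "(\<Sum>i\<le>n. (if i = 0 then d else 0) * y ^ i) = (\<Sum>i\<le>n. if i = 0 then d else 0)"
        by (rule sum.cong) auto
      also have "\<dots> = d" by (simp add: sum.delta)
      finally show ?thesis .
    qed
    finally show ?thesis unfolding gs by simp
  qed
  show ?thesis
  proof (intro exI[of _ cf] exI[of _ n] ballI)
    fix y :: real assume y: "y \<in> {0..1}"
    show "h y \<le> (\<Sum>i\<le>n. cf i * y ^ i) \<and> (\<Sum>i\<le>n. cf i * y ^ i) \<le> h y + 2 * d"
      unfolding e using gh[OF y] by (simp add: abs_less_iff)
  qed
qed

lemma poly_approx_below: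
  fixes h :: "real \<Rightarrow> real"
  assumes c: "continuous_on {0..1} h" and d: "0 < d"
  shows "\<exists>cf n. \<forall>y\<in>{0..1}. h y - 2 * d \<le> (\<Sum>i\<le>n. cf i * y ^ i) \<and> (\<Sum>i\<le>n. cf i * y ^ i) \<le> h y"
proof -
  have c': "continuous_on {0..1} (\<lambda>y. - h y)" using c by (intro continuous_intros)
  obtain cf n where P: "\<And>y. y \<in> {0..1} \<Longrightarrow> - h y \<le> (\<Sum>i\<le>n. cf i * y ^ i) \<and> (\<Sum>i\<le>n. cf i * y ^ i) \<le> - h y + 2 * d"
    using poly_approx_above[OF c' d] by blast
  have e: "(\<Sum>i\<le>n. (- cf i) * y ^ i) = - (\<Sum>i\<le>n. cf i * y ^ i)" for y
    by (simp add: sum_negf)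
  show ?thesis
  proof (intro exI[of _ "\<lambda>i. - cf i"] exI[of _ n] ballI)
    fix y :: real assume y: "y \<in> {0..1}"
    show "h y - 2 * d \<le> (\<Sum>i\<le>n. - cf i * y ^ i) \<and> (\<Sum>i\<le>n. - cf i * y ^ i) \<le> h y"
      unfolding e using P[OF y] by linarith
  qed
qed

lemma phiP_alt: "phiP cf n v = exp (- v) * (\<Sum>i\<le>n. cf i * exp (- v) ^ i)"
  unfolding phiP_def sum_distrib_left
proof (rule sum.cong[OF refl])
  fix i
  have "exp (- (real i + 1) * v) = exp (- v) * exp (- v) ^ i"
    by (simp add: exp_of_nat_mult[symmetric] exp_add[symmetric] algebra_simps)
  thus "cf i * exp (- (real i + 1) * v) = exp (- v) * (cf i * exp (- v) ^ i)" by simp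
qed

definition clamp :: "real \<Rightarrow> real" where "clamp x = max 0 (min 1 x)"

lemma clamp_bounds: "0 \<le> clamp x" "clamp x \<le> 1" unfolding clamp_def by auto

lemma cont_clamp: "continuous_on S f \<Longrightarrow> continuous_on S (\<lambda>x. clamp (f x))"
  unfolding clamp_def by (intro continuous_intros)

context setting begin

lemma sandwich: assumes e: "0 < \<epsilon>"
  shows "\<exists>cl nl ch nh. (\<forall>v\<ge>0. phiP cl nl v \<le> indicator {..1} v) \<and> (\<forall>v\<ge>0. indicator {..1} v \<le> phiP ch nh v) \<and>
    (\<integral>v. indicator {0..} v * phiP ch nh v * v powr (\<alpha> - 1) \<partial>lborel) - (\<integral>v. indicator {0..} v * phiP cl nl v * v powr (\<alpha> - 1) \<partial>lborel) < \<epsilon>"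
proof -
  define a0 :: real where "a0 = exp (- 1)"
  have a0: "0 < a0" "a0 < 1" unfolding a0_def by auto
  define \<eta> where "\<eta> = min (a0 / 2) (\<epsilon> * a0 / 32)"
  have \<eta>: "0 < \<eta>" "\<eta> \<le> a0 / 2" "\<eta> \<le> \<epsilon> * a0 / 32" unfolding \<eta>_def using a0 e by auto
  have Ga: "Gamma \<alpha> > 0" using alpha by simp
  define \<delta> where "\<delta> = \<epsilon> / (16 * Gamma \<alpha>)"
  have \<delta>: "0 < \<delta>" "4 * \<delta> * Gamma \<alpha> = \<epsilon> / 4" unfolding \<delta>_def using e Ga by auto
  define hH where "hH y = clamp ((y - (a0 - \<eta>)) / \<eta>) / max y a0" for y
  define hL where "hL y = clamp ((y - a0) / \<eta>) / max y a0" for y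
  have cH: "continuous_on {0..1} hH" unfolding hH_def
    by (intro continuous_intros cont_clamp) (use a0 \<eta> in auto)
  have cL: "continuous_on {0..1} hL" unfolding hL_def
    by (intro continuous_intros cont_clamp) (use a0 \<eta> in auto)
  obtain ch nh where PH: "\<And>y. y \<in> {0..1} \<Longrightarrow> hH y \<le> (\<Sum>i\<le>nh. ch i * y ^ i) \<and> (\<Sum>i\<le>nh. ch i * y ^ i) \<le> hH y + 2 * \<delta>"
    using poly_approx_above[OF cH \<delta>(1)] by blast
  obtain cl nl where PL: "\<And>y. y \<in> {0..1} \<Longrightarrow> hL y - 2 * \<delta> \<le> (\<Sum>i\<le>nl. cl i * y ^ i) \<and> (\<Sum>i\<le>nl. cl i * y ^ i) \<le> hL y"
    using poly_approx_below[OF cL \<delta>(1)] by blast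
  define ind where "ind y = (if a0 \<le> y then 1 else 0 :: real)" for y
  have G1: "y * hL y \<le> ind y" if "0 < y" for y
  proof (cases "a0 \<le> y")
    case True
    hence "y * hL y = clamp ((y - a0) / \<eta>)" unfolding hL_def using that by simp
    thus ?thesis using clamp_bounds True unfolding ind_def by simp
  next
    case False
    hence "(y - a0) / \<eta> \<le> 0" using \<eta> by (simp add: divide_nonpos_pos)
    hence "clamp ((y - a0) / \<eta>) = 0" unfolding clamp_def by simp
    thus ?thesis unfolding hL_def ind_def using False by simp
  qed
  have G2: "ind y \<le> y * hH y" if "0 < y" for y
  proof (cases "a0 \<le> y")
    case True
    hence "(y - (a0 - \<eta>)) / \<eta> \<ge> 1" using \<eta> by simp
    hence "clamp ((y - (a0 - \<eta>)) / \<eta>) = 1" unfolding clamp_def by simp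
    thus ?thesis unfolding hH_def ind_def using True that by simp
  next
    case False
    have "0 \<le> y * hH y" unfolding hH_def using that clamp_bounds a0 by simp
    thus ?thesis unfolding ind_def using False by simp
  qed
  have G3: "y * (hH y - hL y) \<le> indicator {a0 - \<eta>..a0 + \<eta>} y" if "0 < y" for y
  proof -
    consider "y < a0 - \<eta>" | "a0 + \<eta> < y" | "y \<in> {a0 - \<eta>..a0 + \<eta>}" by force
    thus ?thesis
    proof cases
      case 1
      hence "(y - (a0 - \<eta>)) / \<eta> \<le> 0" "(y - a0) / \<eta> \<le> 0" using \<eta> by (auto simp: divide_nonpos_pos)
      hence "hH y = 0" "hL y = 0" unfolding hH_def hL_def clamp_def by auto
      thus ?thesis by simp
    next
      case 2
      hence "(y - (a0 - \<eta>)) / \<eta> \<ge> 1" "(y - a0) / \<eta> \<ge> 1" using \<eta> by auto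
      hence "hH y = hL y" unfolding hH_def hL_def clamp_def by auto
      thus ?thesis by simp
    next
      case 3
      have "y * hH y \<le> 1"
      proof -
        have "y * hH y = clamp ((y - (a0 - \<eta>)) / \<eta>) * (y / max y a0)" unfolding hH_def by simp
        also have "\<dots> \<le> 1 * 1" using clamp_bounds that a0
          by (intro mult_mono) (auto simp: divide_le_eq_1)
        finally show ?thesis by simp
      qed
      moreover have "0 \<le> y * hL y" unfolding hL_def using that clamp_bounds a0 by simp
      ultimately show ?thesis using 3 by (simp add: algebra_simps)
    qed
  qed
  define v1 where "v1 = - ln (a0 + \<eta>)"
  define v2 where "v2 = - ln (a0 - \<eta>)"
  have amh: "a0 - \<eta> > 0" using \<eta> a0 by simp
  have v12: "v1 \<le> v2" unfolding v1_def v2_def using amh \<eta> by simp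
  have v1h: "v1 \<ge> 1 / 2"
  proof -
    have "a0 + \<eta> \<le> 3 / 2 * a0" using \<eta> by simp
    also have "\<dots> \<le> exp (- 1 / 2)"
    proof -
      have "3 / 2 \<le> exp (1 / 2 :: real)" using exp_ge_add_one_self[of "1/2::real"] by simp
      hence "3 / 2 * exp (- 1) \<le> exp (1 / 2) * exp (- 1 :: real)" by (intro mult_right_mono) auto
      also have "\<dots> = exp (- 1 / 2)" by (simp add: exp_add[symmetric])
      finally show ?thesis unfolding a0_def .
    qed
    finally have "a0 + \<eta> \<le> exp (- 1 / 2)" .
    hence "ln (a0 + \<eta>) \<le> ln (exp (- 1 / 2))" using a0 \<eta> by (subst ln_le_cancel_iff) auto
    thus ?thesis unfolding v1_def by simp
  qed
  have v21: "v2 - v1 \<le> 4 * \<eta> / a0"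
  proof -
    have "v2 - v1 = ln ((a0 + \<eta>) / (a0 - \<eta>))" unfolding v1_def v2_def using amh \<eta> by (simp add: ln_div)
    also have "\<dots> \<le> (a0 + \<eta>) / (a0 - \<eta>) - 1" using amh \<eta> by (intro ln_le_minus_one) auto
    also have "\<dots> = 2 * \<eta> / (a0 - \<eta>)" using amh by (simp add: field_simps)
    also have "\<dots> \<le> 2 * \<eta> / (a0 / 2)" using amh \<eta> a0 by (intro divide_left_mono) auto
    also have "\<dots> = 4 * \<eta> / a0" by simp
    finally show ?thesis .
  qed
  define H where "H v = indicator {0..} v * phiP ch nh v * v powr (\<alpha> - 1)" for v
  define Lo where "Lo v = indicator {0..} v * phiP cl nl v * v powr (\<alpha> - 1)" for v
  define B where "B v = 2 * indicator {v1..v2} v + 4 * \<delta> * (indicator {0..} v * exp (- 1 * v) * v powr (\<alpha> - 1))" for v :: real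
  have sandL: "phiP cl nl v \<le> indicator {..1} v" if v: "0 \<le> v" for v
  proof -
    define y where "y = exp (- v)"
    have y: "0 < y" "y \<le> 1" unfolding y_def using v by auto
    have iy: "indicator {..1} v = ind y" unfolding ind_def y_def a0_def by (auto split: split_indicator)
    have "phiP cl nl v = y * (\<Sum>i\<le>nl. cl i * y ^ i)" unfolding phiP_alt y_def ..
    also have "\<dots> \<le> y * hL y" using PL[of y] y by (intro mult_left_mono) auto
    also have "\<dots> \<le> ind y" by (rule G1[OF y(1)])
    finally show ?thesis unfolding iy .
  qed
  have sandH: "indicator {..1} v \<le> phiP ch nh v" if v: "0 \<le> v" for v
  proof -
    define y where "y = exp (- v)"
    have y: "0 < y" "y \<le> 1" unfolding y_def using v by auto
    have iy: "indicator {..1} v = ind y" unfolding ind_def y_def a0_def by (auto split: split_indicator)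
    have "ind y \<le> y * hH y" by (rule G2[OF y(1)])
    also have "\<dots> \<le> y * (\<Sum>i\<le>nh. ch i * y ^ i)" using PH[of y] y by (intro mult_left_mono) auto
    also have "\<dots> = phiP ch nh v" unfolding phiP_alt y_def ..
    finally show ?thesis unfolding iy .
  qed
  have DB: "H v - Lo v \<le> B v" for v
  proof (cases "0 \<le> v")
    case False
    thus ?thesis unfolding H_def Lo_def B_def using \<delta> by (simp add: indicator_def)
  next
    case True
    define y where "y = exp (- v)"
    have y: "0 < y" "y \<le> 1" unfolding y_def using True by auto
    define w where "w = v powr (\<alpha> - 1)"
    have w0: "0 \<le> w" unfolding w_def by simp
    have "phiP ch nh v - phiP cl nl v = y * ((\<Sum>i\<le>nh. ch i * y ^ i) - (\<Sum>i\<le>nl. cl i * y ^ i))"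
      unfolding phiP_alt y_def by (simp add: algebra_simps)
    also have "\<dots> \<le> y * ((hH y + 2 * \<delta>) - (hL y - 2 * \<delta>))"
      using PH[of y] PL[of y] y by (intro mult_left_mono) auto
    also have "\<dots> = y * (hH y - hL y) + 4 * \<delta> * y" by (simp add: algebra_simps)
    also have "\<dots> \<le> indicator {a0 - \<eta>..a0 + \<eta>} y + 4 * \<delta> * y" using G3[OF y(1)] by simp
    finally have d1: "phiP ch nh v - phiP cl nl v \<le> indicator {a0 - \<eta>..a0 + \<eta>} y + 4 * \<delta> * y" .
    have d2: "indicator {a0 - \<eta>..a0 + \<eta>} y * w \<le> 2 * indicator {v1..v2} v"
    proof (cases "y \<in> {a0 - \<eta>..a0 + \<eta>}")
      case True
      hence "ln y \<le> ln (a0 + \<eta>)" "ln (a0 - \<eta>) \<le> ln y" using y amh by auto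
      hence vv: "v1 \<le> v" "v \<le> v2" unfolding v1_def v2_def y_def by auto
      have "w \<le> (1 / 2) powr (\<alpha> - 1)" unfolding w_def using vv v1h alpha by (intro powr_mono2') auto
      also have "(1 / 2 :: real) powr (\<alpha> - 1) = 2 powr (1 - \<alpha>)"
        by (simp add: powr_divide powr_minus_divide[symmetric] powr_minus)
      also have "\<dots> \<le> 2 powr 1" using alpha by (intro powr_mono) auto
      finally show ?thesis using True vv by simp
    next
      case False
      hence "indicator {a0 - \<eta>..a0 + \<eta>} y = (0::real)" by simp
      thus ?thesis by simp
    qed
    have "H v - Lo v = (phiP ch nh v - phiP cl nl v) * w" unfolding H_def Lo_def w_def using True by (simp add: algebra_simps)
    also have "\<dots> \<le> (indicator {a0 - \<eta>..a0 + \<eta>} y + 4 * \<delta> * y) * w" using d1 w0 by (rule mult_right_mono)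
    also have "\<dots> = indicator {a0 - \<eta>..a0 + \<eta>} y * w + 4 * \<delta> * (y * w)" by (simp add: algebra_simps)
    also have "\<dots> \<le> B v" unfolding B_def y_def w_def using d2 True unfolding w_def y_def by simp
    finally show ?thesis .
  qed
  have Hi: "integrable lborel H" unfolding H_def by (rule nu_phiP(1))
  have Li: "integrable lborel Lo" unfolding Lo_def by (rule nu_phiP(1))
  have Ei: "integrable lborel (\<lambda>v. indicator {0..} v * exp (- 1 * v) * v powr (\<alpha> - 1))" by (rule nu_exp(1)) simp
  have Ii: "integrable lborel (\<lambda>v::real. indicator {v1..v2} v :: real)"
    by (rule integrable_real_indicator) (auto simp: emeasure_lborel_Icc_eq)
  have Bi: "integrable lborel B" unfolding B_def
    by (intro Bochner_Integration.integrable_add Bochner_Integration.integrable_mult_right Ii Ei)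
  have IB: "(\<integral>v. B v \<partial>lborel) = 2 * (v2 - v1) + 4 * \<delta> * Gamma \<alpha>"
  proof -
    have "(\<integral>v. B v \<partial>lborel) = 2 * (\<integral>v. indicator {v1..v2} v \<partial>lborel) + 4 * \<delta> * (\<integral>v. indicator {0..} v * exp (- 1 * v) * v powr (\<alpha> - 1) \<partial>lborel)"
      unfolding B_def using Ii Ei by simp
    also have "(\<integral>v. indicator {v1..v2} v \<partial>lborel) = v2 - v1" using v12 by simp
    also have "(\<integral>v. indicator {0..} v * exp (- 1 * v) * v powr (\<alpha> - 1) \<partial>lborel) = Gamma \<alpha>"
      using nu_exp(2)[of 1] by simp
    finally show ?thesis .
  qed
  have "(\<integral>v. H v \<partial>lborel) - (\<integral>v. Lo v \<partial>lborel) = (\<integral>v. H v - Lo v \<partial>lborel)"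
    using Hi Li by simp
  also have "\<dots> \<le> (\<integral>v. B v \<partial>lborel)"
    by (rule integral_mono[OF _ Bi DB]) (use Hi Li in simp)
  also have "\<dots> \<le> 2 * (4 * \<eta> / a0) + \<epsilon> / 4" unfolding IB \<delta>(2) using v21 by simp
  also have "2 * (4 * \<eta> / a0) \<le> \<epsilon> / 4" using \<eta>(3) a0 by (simp add: field_simps)
  hence "2 * (4 * \<eta> / a0) + \<epsilon> / 4 < \<epsilon>" using e by simp
  finally have fin: "(\<integral>v. H v \<partial>lborel) - (\<integral>v. Lo v \<partial>lborel) < \<epsilon>" .
  show ?thesis
    by (intro exI[of _ cl] exI[of _ nl] exI[of _ ch] exI[of _ nh] conjI allI impI sandL sandH)
       (use fin in \<open>simp_all add: H_def Lo_def\<close>)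
qed

end

context setting begin

definition cst :: real where "cst = 1 / (Gamma \<alpha> * Gamma (1 - \<alpha>))"

lemma cst_pos: "cst > 0" unfolding cst_def using alpha by simp

lemma Kf_ind: assumes t: "0 < t" shows "Kf (indicator {..1}) t = lam t * integral {0..t} r"
proof -
  have "(\<lambda>u. ext r u * indicator {..1} (u / t)) = (\<lambda>u. indicator {0..t} u *\<^sub>R r u)"
    by (rule ext) (use t in \<open>auto simp: ext_def field_simps split: split_indicator\<close>)
  hence "(\<integral>u. ext r u * indicator {..1} (u / t) \<partial>lborel) = (LBINT u:{0..t}. r u)"
    by (simp add: set_lebesgue_integral_def)
  also have "\<dots> = integral {0..t} r"
    by (rule set_borel_integral_eq_integral(2)[OF borel_integrable_atLeastAtMost'[OF cont_sub[OF r_cont]]])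
  finally show ?thesis unfolding Kf_def by simp
qed

lemma Kf_ind_int: assumes t: "0 < t" shows "integrable lborel (\<lambda>u. ext r u * indicator {..1} (u / t))"
proof -
  have "(\<lambda>u. ext r u * indicator {..1} (u / t)) = (\<lambda>u. indicator {0..t} u *\<^sub>R r u)"
    by (rule ext) (use t in \<open>auto simp: ext_def field_simps split: split_indicator\<close>)
  thus ?thesis using borel_integrable_atLeastAtMost'[OF cont_sub[OF r_cont, of t]]
    by (simp add: set_integrable_def)
qed

lemma Kf_phiP_int: assumes t: "0 < t" shows "integrable lborel (\<lambda>u. ext r u * phiP cf n (u / t))"
proof -
  have "(\<lambda>u. ext r u * phiP cf n (u / t)) = (\<lambda>u. \<Sum>i\<le>n. cf i * (ext r u * exp (- (real i + 1) * (u / t))))"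
    unfolding phiP_def by (rule ext) (simp add: sum_distrib_left algebra_simps)
  have "integrable lborel (\<lambda>u. \<Sum>i\<le>n. cf i * (ext r u * exp (- (real i + 1) * (u / t))))"
    by (intro Bochner_Integration.integrable_sum Bochner_Integration.integrable_mult_right K_term_int t) simp
  thus ?thesis unfolding \<open>(\<lambda>u. ext r u * phiP cf n (u / t)) = _\<close> .
qed

lemma Kf_mono: assumes t: "0 < t" and i1: "integrable lborel (\<lambda>u. ext r u * \<phi> (u / t))"
  and i2: "integrable lborel (\<lambda>u. ext r u * \<psi> (u / t))" and le: "\<And>v. 0 \<le> v \<Longrightarrow> \<phi> v \<le> \<psi> v"
  shows "Kf \<phi> t \<le> Kf \<psi> t"
proof -
  have "(\<integral>u. ext r u * \<phi> (u / t) \<partial>lborel) \<le> (\<integral>u. ext r u * \<psi> (u / t) \<partial>lborel)"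
  proof (rule integral_mono[OF i1 i2])
    fix u
    show "ext r u * \<phi> (u / t) \<le> ext r u * \<psi> (u / t)"
    proof (cases "0 \<le> u")
      case True
      hence "\<phi> (u / t) \<le> \<psi> (u / t)" using t by (intro le) simp
      moreover have "0 \<le> ext r u" using ext_nonneg[of r u] r_nonneg by blast
      ultimately show ?thesis by (rule mult_left_mono)
    qed (simp add: ext_def)
  qed
  moreover have "0 \<le> lam t" using lam_pos t by (simp add: less_imp_le)
  ultimately show ?thesis unfolding Kf_def by (rule mult_left_mono)
qed

lemma K_phiP_lim: "((\<lambda>t. Kf (phiP cf n) t) \<longlongrightarrow> cst * (\<integral>v. indicator {0..} v * phiP cf n v * v powr (\<alpha> - 1) \<partial>lborel)) at_top"
proof -
  have "cst * (\<integral>v. indicator {0..} v * phiP cf n v * v powr (\<alpha> - 1) \<partial>lborel) = (\<Sum>i\<le>n. cf i * ((real i + 1) powr - \<alpha> / Gamma (1 - \<alpha>)))"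
  proof -
    have "Gamma \<alpha> > 0" using alpha by simp
    hence g: "cst * Gamma \<alpha> = 1 / Gamma (1 - \<alpha>)" unfolding cst_def by simp
    have "cst * (Gamma \<alpha> * (\<Sum>i\<le>n. cf i * (real i + 1) powr - \<alpha>)) = (cst * Gamma \<alpha>) * (\<Sum>i\<le>n. cf i * (real i + 1) powr - \<alpha>)"
      by simp
    also have "\<dots> = (\<Sum>i\<le>n. cf i * ((real i + 1) powr - \<alpha> / Gamma (1 - \<alpha>)))"
      unfolding g by (simp add: sum_distrib_left)
    finally show ?thesis unfolding nu_phiP(2) .
  qed
  thus ?thesis using K_poly by simp
qed

lemma nu_mono: assumes le: "\<And>v. 0 \<le> v \<Longrightarrow> \<phi> v \<le> \<psi> v"
  and i1: "integrable lborel (\<lambda>v. indicator {0..} v * \<phi> v * v powr (\<alpha> - 1))"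
  and i2: "integrable lborel (\<lambda>v. indicator {0..} v * \<psi> v * v powr (\<alpha> - 1))"
  shows "(\<integral>v. indicator {0..} v * \<phi> v * v powr (\<alpha> - 1) \<partial>lborel) \<le> (\<integral>v. indicator {0..} v * \<psi> v * v powr (\<alpha> - 1) \<partial>lborel)"
proof (rule integral_mono[OF i1 i2])
  fix v :: real
  show "indicator {0..} v * \<phi> v * v powr (\<alpha> - 1) \<le> indicator {0..} v * \<psi> v * v powr (\<alpha> - 1)"
    using le[of v] by (cases "0 \<le> v") (auto intro: mult_right_mono)
qed

lemma U_lim: "((\<lambda>t. lam t * integral {0..t} r) \<longlongrightarrow> cst / \<alpha>) at_top"
proof (rule order_tendstoI)
  fix b assume b: "cst / \<alpha> < b"
  define \<epsilon> where "\<epsilon> = (b - cst / \<alpha>) / (2 * cst)"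
  have e: "0 < \<epsilon>" unfolding \<epsilon>_def using b cst_pos by simp
  obtain cl nl ch nh where sL: "\<forall>v\<ge>0. phiP cl nl v \<le> indicator {..1} v"
    and sH: "\<forall>v\<ge>0. indicator {..1} v \<le> phiP ch nh v"
    and d: "(\<integral>v. indicator {0..} v * phiP ch nh v * v powr (\<alpha> - 1) \<partial>lborel) - (\<integral>v. indicator {0..} v * phiP cl nl v * v powr (\<alpha> - 1) \<partial>lborel) < \<epsilon>"
    using sandwich[OF e] by blast
  have "(\<integral>v. indicator {0..} v * phiP cl nl v * v powr (\<alpha> - 1) \<partial>lborel) \<le> (\<integral>v. indicator {0..} v * indicator {..1} v * v powr (\<alpha> - 1) \<partial>lborel)"
    by (rule nu_mono[OF _ nu_phiP(1) nu_one(1)]) (use sL in auto)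
  hence "(\<integral>v. indicator {0..} v * phiP ch nh v * v powr (\<alpha> - 1) \<partial>lborel) < 1 / \<alpha> + \<epsilon>"
    using d unfolding nu_one(2) by linarith
  hence "cst * (\<integral>v. indicator {0..} v * phiP ch nh v * v powr (\<alpha> - 1) \<partial>lborel) < cst * (1 / \<alpha> + \<epsilon>)"
    using cst_pos by simp
  also have "cst * (1 / \<alpha> + \<epsilon>) < b"
  proof -
    have "cst * (1 / \<alpha> + \<epsilon>) = cst / \<alpha> + (b - cst / \<alpha>) / 2" unfolding \<epsilon>_def using cst_pos by (simp add: field_simps)
    thus ?thesis using b by argo
  qed
  finally have "eventually (\<lambda>t. Kf (phiP ch nh) t < b) at_top"
    by (rule order_tendstoD(2)[OF K_phiP_lim])
  thus "eventually (\<lambda>t. lam t * integral {0..t} r < b) at_top"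
    using eventually_gt_at_top[of 0]
  proof eventually_elim
    case (elim t)
    have "lam t * integral {0..t} r = Kf (indicator {..1}) t" using Kf_ind[OF elim(2)] by simp
    also have "\<dots> \<le> Kf (phiP ch nh) t"
      by (rule Kf_mono[OF elim(2) Kf_ind_int[OF elim(2)] Kf_phiP_int[OF elim(2)]]) (use sH in auto)
    finally show ?case using elim(1) by simp
  qed
next
  fix b assume b: "b < cst / \<alpha>"
  define \<epsilon> where "\<epsilon> = (cst / \<alpha> - b) / (2 * cst)"
  have e: "0 < \<epsilon>" unfolding \<epsilon>_def using b cst_pos by simp
  obtain cl nl ch nh where sL: "\<forall>v\<ge>0. phiP cl nl v \<le> indicator {..1} v"
    and sH: "\<forall>v\<ge>0. indicator {..1} v \<le> phiP ch nh v"
    and d: "(\<integral>v. indicator {0..} v * phiP ch nh v * v powr (\<alpha> - 1) \<partial>lborel) - (\<integral>v. indicator {0..} v * phiP cl nl v * v powr (\<alpha> - 1) \<partial>lborel) < \<epsilon>"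
    using sandwich[OF e] by blast
  have "(\<integral>v. indicator {0..} v * indicator {..1} v * v powr (\<alpha> - 1) \<partial>lborel) \<le> (\<integral>v. indicator {0..} v * phiP ch nh v * v powr (\<alpha> - 1) \<partial>lborel)"
    by (rule nu_mono[OF _ nu_one(1) nu_phiP(1)]) (use sH in auto)
  hence "(\<integral>v. indicator {0..} v * phiP cl nl v * v powr (\<alpha> - 1) \<partial>lborel) > 1 / \<alpha> - \<epsilon>"
    using d unfolding nu_one(2) by linarith
  hence "cst * (\<integral>v. indicator {0..} v * phiP cl nl v * v powr (\<alpha> - 1) \<partial>lborel) > cst * (1 / \<alpha> - \<epsilon>)"
    using cst_pos by simp
  moreover have "cst * (1 / \<alpha> - \<epsilon>) > b"
  proof -
    have "cst * (1 / \<alpha> - \<epsilon>) = cst / \<alpha> - (cst / \<alpha> - b) / 2" unfolding \<epsilon>_def using cst_pos by (simp add: field_simps)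
    thus ?thesis using b by argo
  qed
  ultimately have "b < cst * (\<integral>v. indicator {0..} v * phiP cl nl v * v powr (\<alpha> - 1) \<partial>lborel)" by linarith
  hence "eventually (\<lambda>t. b < Kf (phiP cl nl) t) at_top"
    by (rule order_tendstoD(1)[OF K_phiP_lim])
  thus "eventually (\<lambda>t. b < lam t * integral {0..t} r) at_top"
    using eventually_gt_at_top[of 0]
  proof eventually_elim
    case (elim t)
    have "Kf (phiP cl nl) t \<le> Kf (indicator {..1}) t"
      by (rule Kf_mono[OF elim(2) Kf_phiP_int[OF elim(2)] Kf_ind_int[OF elim(2)]]) (use sL in auto)
    also have "\<dots> = lam t * integral {0..t} r" using Kf_ind[OF elim(2)] by simp
    finally show ?case using elim(1) by simp
  qed
qed

end

lemma powr_quot: fixes al :: real assumes e: "0 < e"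
  shows "\<exists>d>0. \<forall>h. h \<noteq> 0 \<and> \<bar>h\<bar> < d \<longrightarrow> \<bar>((1 + h) powr al - 1) / h - al\<bar> < e"
proof -
  have "((\<lambda>z. z powr al) has_real_derivative al * 1 powr (al - 1)) (at 1)"
    by (rule has_real_derivative_powr) simp
  hence "((\<lambda>h. ((1 + h) powr al - 1 powr al) / h) \<longlongrightarrow> al) (at 0)"
    unfolding DERIV_def by simp
  from LIM_D[OF this e] show ?thesis by simp
qed

context setting begin

definition U :: "real \<Rightarrow> real" where "U t = integral {0..t} r"

lemma U_diff: assumes "0 \<le> t" "t \<le> s"
  shows "(s - t) * r s \<le> U s - U t" "U s - U t \<le> (s - t) * r t"
proof -
  have ri: "r integrable_on {0..s}" by (rule integrable_continuous_real, rule cont_sub[OF r_cont])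
  have "U t + integral {t..s} r = U s"
    unfolding U_def by (rule Henstock_Kurzweil_Integration.integral_combine[OF assms ri])
  hence e: "U s - U t = integral {t..s} r" by simp
  have ri2: "r integrable_on {t..s}" by (rule integrable_on_subinterval[OF ri]) (use assms in auto)
  have "integral {t..s} (\<lambda>_. r s) \<le> integral {t..s} r"
    by (rule integral_le[OF _ ri2]) (use assms r_mono in auto)
  thus "(s - t) * r s \<le> U s - U t" unfolding e using assms by simp
  have "integral {t..s} r \<le> integral {t..s} (\<lambda>_. r t)"
    by (rule integral_le[OF ri2]) (use assms r_mono in auto)
  thus "U s - U t \<le> (s - t) * r t" unfolding e using assms by simp
qed

lemma Ux_lim: assumes x: "0 < x"
  shows "((\<lambda>t. lam t * (U (x * t) - U t)) \<longlongrightarrow> cst / \<alpha> * x powr \<alpha> - cst / \<alpha>) at_top"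
proof -
  have tau: "filterlim (\<lambda>t. x * t) at_top at_top"
    by (rule filterlim_tendsto_pos_mult_at_top[OF tendsto_const x filterlim_ident])
  have A: "((\<lambda>t. lam (x * t) * U (x * t)) \<longlongrightarrow> cst / \<alpha>) at_top"
    using filterlim_compose[OF U_lim tau] unfolding U_def by (simp add: o_def)
  have B: "((\<lambda>t. inverse (lam (x * t) / lam t)) \<longlongrightarrow> inverse (x powr - \<alpha>)) at_top"
    by (rule tendsto_inverse[OF ratio_lim[OF x]]) (use x in simp)
  have C: "((\<lambda>t. lam t * U t) \<longlongrightarrow> cst / \<alpha>) at_top" using U_lim unfolding U_def .
  have D: "((\<lambda>t. lam (x * t) * U (x * t) * inverse (lam (x * t) / lam t) - lam t * U t)
      \<longlongrightarrow> cst / \<alpha> * inverse (x powr - \<alpha>) - cst / \<alpha>) at_top"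
    by (intro tendsto_intros A B C)
  have "eventually (\<lambda>t. lam (x * t) * U (x * t) * inverse (lam (x * t) / lam t) - lam t * U t = lam t * (U (x * t) - U t)) at_top"
    using eventually_gt_at_top[of 0]
  proof eventually_elim
    case (elim t)
    have "lam (x * t) > 0" "lam t > 0" using lam_pos x elim by auto
    thus ?case by (simp add: field_simps)
  qed
  moreover have "inverse (x powr - \<alpha>) = x powr \<alpha>" using x by (simp add: powr_minus)
  ultimately show ?thesis using D by (simp add: tendsto_cong)
qed

lemma density: "((\<lambda>t. t * r t * lam t) \<longlongrightarrow> cst) at_top"
proof (rule order_tendstoI)
  fix b assume b: "b < cst"
  define e where "e = \<alpha> - \<alpha> * b / cst"
  have e: "0 < e" unfolding e_def using b cst_pos alpha by (simp add: field_simps)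
  obtain d where d: "d > 0" and Q: "\<And>h. h \<noteq> 0 \<and> \<bar>h\<bar> < d \<Longrightarrow> \<bar>((1 + h) powr \<alpha> - 1) / h - \<alpha>\<bar> < e"
    using powr_quot[OF e] by blast
  define h where "h = d / 2"
  have h: "0 < h" "h < d" unfolding h_def using d by auto
  define x where "x = 1 + h"
  have x: "0 < x" "1 < x" unfolding x_def using h by auto
  have q: "((1 + h) powr \<alpha> - 1) / h > \<alpha> * b / cst" using Q[of h] h unfolding e_def by auto
  have Lx: "(cst / \<alpha> * x powr \<alpha> - cst / \<alpha>) / (x - 1) > b"
  proof -
    have "(cst / \<alpha> * x powr \<alpha> - cst / \<alpha>) / (x - 1) = cst / \<alpha> * (((1 + h) powr \<alpha> - 1) / h)"
      unfolding x_def using h alpha by (simp add: field_simps)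
    also have "\<dots> > cst / \<alpha> * (\<alpha> * b / cst)" using q cst_pos alpha by (intro mult_strict_left_mono) auto
    also have "cst / \<alpha> * (\<alpha> * b / cst) = b" using cst_pos alpha by simp
    finally show ?thesis .
  qed
  have "((\<lambda>t. lam t * (U (x * t) - U t) / (x - 1)) \<longlongrightarrow> (cst / \<alpha> * x powr \<alpha> - cst / \<alpha>) / (x - 1)) at_top"
    by (intro tendsto_divide Ux_lim x tendsto_const) (use x in simp)
  from order_tendstoD(1)[OF this Lx]
  show "eventually (\<lambda>t. b < t * r t * lam t) at_top"
    using eventually_gt_at_top[of 0]
  proof eventually_elim
    case (elim t)
    have "U (x * t) - U t \<le> (x * t - t) * r t" by (rule U_diff(2)) (use elim x in auto)
    hence "lam t * (U (x * t) - U t) \<le> lam t * ((x * t - t) * r t)"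
      using lam_pos[of t] elim by (intro mult_left_mono) auto
    hence "lam t * (U (x * t) - U t) / (x - 1) \<le> lam t * ((x * t - t) * r t) / (x - 1)"
      using x by (intro divide_right_mono) auto
    also have "lam t * ((x * t - t) * r t) / (x - 1) = t * r t * lam t" using x by (simp add: field_simps)
    finally show ?case using elim(1) by simp
  qed
next
  fix b assume b: "cst < b"
  define e where "e = \<alpha> * b / cst - \<alpha>"
  have e: "0 < e" unfolding e_def using b cst_pos alpha by (simp add: field_simps)
  obtain d where d: "d > 0" and Q: "\<And>h. h \<noteq> 0 \<and> \<bar>h\<bar> < d \<Longrightarrow> \<bar>((1 + h) powr \<alpha> - 1) / h - \<alpha>\<bar> < e"
    using powr_quot[OF e] by blast
  define h where "h = min (d / 2) (1 / 2)"
  have h: "0 < h" "h < d" "h < 1" unfolding h_def using d by auto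
  define x where "x = 1 - h"
  have x: "0 < x" "x < 1" unfolding x_def using h by auto
  have q: "((1 + (- h)) powr \<alpha> - 1) / (- h) < \<alpha> * b / cst" using Q[of "- h"] h unfolding e_def by auto
  have Lx: "(cst / \<alpha> * x powr \<alpha> - cst / \<alpha>) / (x - 1) < b"
  proof -
    have "(cst / \<alpha> * x powr \<alpha> - cst / \<alpha>) / (x - 1) = cst / \<alpha> * (((1 + (- h)) powr \<alpha> - 1) / (- h))"
      unfolding x_def using h alpha by (simp add: field_simps)
    also have "\<dots> < cst / \<alpha> * (\<alpha> * b / cst)" using q cst_pos alpha by (intro mult_strict_left_mono) auto
    also have "cst / \<alpha> * (\<alpha> * b / cst) = b" using cst_pos alpha by simp
    finally show ?thesis .
  qed
  have "((\<lambda>t. lam t * (U (x * t) - U t) / (x - 1)) \<longlongrightarrow> (cst / \<alpha> * x powr \<alpha> - cst / \<alpha>) / (x - 1)) at_top"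
    by (intro tendsto_divide Ux_lim x tendsto_const) (use x in simp)
  from order_tendstoD(2)[OF this Lx]
  show "eventually (\<lambda>t. t * r t * lam t < b) at_top"
    using eventually_gt_at_top[of 0]
  proof eventually_elim
    case (elim t)
    have "(t - x * t) * r t \<le> U t - U (x * t)" by (rule U_diff(1)) (use elim x in auto)
    hence "lam t * ((t - x * t) * r t) \<le> lam t * (U t - U (x * t))"
      using lam_pos[of t] elim by (intro mult_left_mono) auto
    hence "lam t * ((t - x * t) * r t) / (1 - x) \<le> lam t * (U t - U (x * t)) / (1 - x)"
      using x by (intro divide_right_mono) auto
    also have "lam t * (U t - U (x * t)) / (1 - x) = lam t * (U (x * t) - U t) / (x - 1)"
      using x by (simp add: field_simps)
    also have "lam t * ((t - x * t) * r t) / (1 - x) = t * r t * lam t" using x by (simp add: field_simps)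
    finally show ?case using elim(1) by simp
  qed
qed

end

lemma gamma_reflect_real: assumes "0 < x" "x < 1"
  shows "Gamma x * Gamma (1 - x) = pi / sin (pi * x)"
proof -
  have "Gamma (complex_of_real x) * Gamma (1 - complex_of_real x) = of_real pi / sin (of_real pi * of_real x)"
    by (rule Gamma_reflection_complex)
  hence "complex_of_real (Gamma x * Gamma (1 - x)) = complex_of_real (pi / sin (pi * x))"
    by (simp add: Gamma_complex_of_real[symmetric] sin_of_real[symmetric])
  thus ?thesis by (simp only: of_real_eq_iff)
qed

lemma powr_tail_int: fixes q T :: real assumes q: "q < -1" and T: "0 < T"
  shows "integrable lborel (\<lambda>t. indicator {T..} t * t powr q)"
proof -
  have hi: "((\<lambda>x. x powr q) has_integral - (T powr (q + 1)) / (q + 1)) {T..}"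
    by (rule has_integral_powr_to_inf[OF q T])
  have nn: "(\<integral>\<^sup>+ x. ennreal (indicator {T..} x * x powr q) \<partial>lborel) = ennreal (- (T powr (q + 1)) / (q + 1))"
    by (rule nn_integral_has_integral_lebesgue[OF _ hi]) simp
  have "(\<integral>\<^sup>+ x. ennreal (indicator {T..} x * x powr q) \<partial>lborel) < \<infinity>" unfolding nn by simp
  thus ?thesis by (intro integrableI_nonneg) auto
qed

context setting begin

lemma main_lim: "((\<lambda>t. r t * t powr (1 - \<alpha>) * L t) \<longlongrightarrow> sin (\<alpha> * pi) / pi) at_top"
proof -
  have e1: "cst = sin (\<alpha> * pi) / pi"
  proof -
    have s: "sin (pi * \<alpha>) > 0" using alpha by (intro sin_gt_zero) auto
    have "cst = 1 / (pi / sin (pi * \<alpha>))" unfolding cst_def using gamma_reflect_real alpha by simp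
    thus ?thesis using s by (simp add: mult.commute)
  qed
  have ev: "eventually (\<lambda>t. t * r t * lam t = r t * t powr (1 - \<alpha>) * L t) at_top"
    using eventually_gt_at_top[of 0]
  proof eventually_elim
    case (elim t)
    have tt: "t * t powr - \<alpha> = t powr (1 - \<alpha>)" using elim by (simp add: powr_diff powr_minus divide_inverse)
    have "t * r t * lam t = r t * (t * t powr - \<alpha>) * L t" unfolding lam_eq[OF elim] by (simp only: ac_simps)
    thus ?case unfolding tt .
  qed
  have d: "((\<lambda>t. t * r t * lam t) \<longlongrightarrow> sin (\<alpha> * pi) / pi) at_top" using density unfolding e1 .
  show ?thesis using tendsto_cong[OF ev] d by blast
qed

lemma r_meas: "(\<lambda>t. indicator {0..} t *\<^sub>R g (r t)) \<in> borel_measurable lborel" if "continuous_on UNIV g" for g :: "real \<Rightarrow> real"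
proof -
  have "continuous_on {0..} (\<lambda>t. g (r t))"
    by (rule continuous_on_compose2[OF that r_cont]) auto
  hence "(\<lambda>t. indicator {0..} t *\<^sub>R g (r t)) \<in> borel_measurable borel"
    by (intro borel_measurable_continuous_on_indicator) auto
  thus ?thesis by simp
qed

lemma L2: assumes "\<alpha> < 1 / 2" shows "set_integrable lborel {0..} (\<lambda>t. (r t)\<^sup>2)"
proof -
  define \<beta> where "\<beta> = (\<alpha> + 1 / 2) / 2"
  have b: "\<alpha> < \<beta>" "\<beta> < 1 / 2" "0 < \<beta>" unfolding \<beta>_def using assms alpha by auto
  obtain T0 C where T0: "T0 > 0" and C: "C > 0"
    and P: "\<And>y w. 0 < y \<Longrightarrow> y \<le> w \<Longrightarrow> T0 \<le> w \<Longrightarrow> lam y \<le> C * (w / y) powr \<beta> * lam w"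
    using potter[OF b(1)] by blast
  have "eventually (\<lambda>t. t * r t * lam t < 2 * cst) at_top"
    using order_tendstoD(2)[OF density] cst_pos by simp
  then obtain T1 where T1: "\<And>t. t \<ge> T1 \<Longrightarrow> t * r t * lam t < 2 * cst"
    by (auto simp: eventually_at_top_linorder)
  define T where "T = max T0 (max T1 1)"
  have T: "T \<ge> T0" "T \<ge> T1" "T \<ge> 1" "T > 0" unfolding T_def using T0 by auto
  define K where "K = (2 * cst * C / (lam T0 * T0 powr \<beta>))\<^sup>2"
  define q where "q = 2 * \<beta> - 2"
  have q: "q < -1" unfolding q_def using b by simp
  have bound: "(r t)\<^sup>2 \<le> K * t powr q" if t: "t \<ge> T" for t
  proof -
    have tp: "t > 0" using t T by simp
    have lT0: "lam T0 > 0" using lam_pos T0 by simp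
    have "lam T0 \<le> C * (t / T0) powr \<beta> * lam t" by (rule P) (use T0 t T in auto)
    hence "lam T0 \<le> C * (t powr \<beta> / T0 powr \<beta>) * lam t" using tp T0 by (simp add: powr_divide)
    hence lb: "lam T0 * T0 powr \<beta> / C * t powr - \<beta> \<le> lam t"
      using C T0 tp by (simp add: field_simps powr_minus)
    have r0: "0 \<le> r t" using r_nonneg tp by simp
    have "t * r t * lam t < 2 * cst" using T1 t T by simp
    define A where "A = lam T0 * T0 powr \<beta> / C"
    have "r t * (t * (A * t powr - \<beta>)) \<le> r t * (t * lam t)"
      using lb r0 tp unfolding A_def by (intro mult_left_mono) auto
    also have "\<dots> = t * r t * lam t" by (simp only: ac_simps)
    finally have l1: "r t * (t * (A * t powr - \<beta>)) < 2 * cst" using \<open>t * r t * lam t < 2 * cst\<close> by simp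
    have tt: "t * t powr - \<beta> = t powr (1 - \<beta>)" using tp by (simp add: powr_diff powr_minus divide_inverse)
    have "t * (A * t powr - \<beta>) = A * (t * t powr - \<beta>)" by (simp only: mult.left_commute)
    also have "\<dots> = A * t powr (1 - \<beta>)" unfolding tt ..
    finally have eqA: "t * (A * t powr - \<beta>) = A * t powr (1 - \<beta>)" .
    have "r t * (A * t powr (1 - \<beta>)) < 2 * cst" using l1 unfolding eqA .
    hence "r t * (A * t powr (1 - \<beta>)) \<le> 2 * cst" by simp
    hence "r t * ((lam T0 * T0 powr \<beta> / C) * t powr (1 - \<beta>)) \<le> 2 * cst" unfolding A_def .
    hence rb: "r t \<le> (2 * cst * C / (lam T0 * T0 powr \<beta>)) * t powr (\<beta> - 1)"
      using lT0 T0 C tp by (simp add: field_simps powr_diff powr_minus)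
    have "(r t)\<^sup>2 \<le> ((2 * cst * C / (lam T0 * T0 powr \<beta>)) * t powr (\<beta> - 1))\<^sup>2"
      using rb r0 by (intro power_mono) auto
    also have "\<dots> = K * t powr q"
    proof -
      have pp: "(t powr (\<beta> - 1))\<^sup>2 = t powr q"
      proof -
        have "(t powr (\<beta> - 1))\<^sup>2 = t powr ((\<beta> - 1) + (\<beta> - 1))"
          unfolding power2_eq_square by (simp only: powr_add)
        also have "(\<beta> - 1) + (\<beta> - 1) = q" unfolding q_def by simp
        finally show ?thesis .
      qed
      show ?thesis unfolding K_def power_mult_distrib pp ..
    qed
    finally show ?thesis .
  qed
  define w where "w t = indicator {0..T} t * 1 + K * (indicator {T..} t * t powr q)" for t :: real
  have wi: "integrable lborel w" unfolding w_def
    by (intro Bochner_Integration.integrable_add Bochner_Integration.integrable_mult_right powr_tail_int q T integrable_real_indicator)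
       (auto simp: emeasure_lborel_Icc_eq)
  show ?thesis unfolding set_integrable_def
  proof (rule Bochner_Integration.integrable_bound[OF wi])
    show "(\<lambda>t. indicator {0..} t *\<^sub>R (r t)\<^sup>2) \<in> borel_measurable lborel"
      using r_meas[of "\<lambda>x. x\<^sup>2"] by (simp add: continuous_intros)
    show "AE x in lborel. norm (indicator {0..} x *\<^sub>R (r x)\<^sup>2) \<le> norm (w x)"
    proof (rule AE_I2)
      fix t :: real
      show "norm (indicator {0..} t *\<^sub>R (r t)\<^sup>2) \<le> norm (w t)"
      proof (cases "0 \<le> t")
        case False thus ?thesis unfolding w_def by (simp add: indicator_def)
      next
        case True
        have K0: "0 \<le> K" unfolding K_def by simp
        show ?thesis
        proof (cases "t \<le> T")
          case True
          have "(r t)\<^sup>2 \<le> 1" using r_nonneg r_le1 \<open>0 \<le> t\<close> by (simp add: power_le_one)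
          moreover have "0 \<le> K * (indicator {T..} t * t powr q)" using K0 by simp
          ultimately show ?thesis unfolding w_def using True \<open>0 \<le> t\<close> by simp
        next
          case False
          hence "(r t)\<^sup>2 \<le> K * t powr q" using bound by simp
          thus ?thesis unfolding w_def using False \<open>0 \<le> t\<close> K0 by simp
        qed
      qed
    qed
  qed
qed

lemma notL1: "\<not> set_integrable lborel {0..} r"
proof
  assume I: "set_integrable lborel {0..} r"
  define M where "M = (LBINT t:{0..}. r t)"
  have Ule: "U t \<le> M" if t: "0 \<le> t" for t
  proof -
    have i1: "set_integrable lborel {0..t} r" by (rule set_integrable_subset[OF I]) auto
    have i2: "set_integrable lborel {t<..} r" by (rule set_integrable_subset[OF I]) (use t in auto)
    have un: "{0..t} \<union> {t<..} = {0..}" using t by auto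
    have "(LBINT s:{0..t} \<union> {t<..}. r s) = (LBINT s:{0..t}. r s) + (LBINT s:{t<..}. r s)"
      by (rule set_integral_Un[OF _ i1 i2]) auto
    hence "M = (LBINT s:{0..t}. r s) + (LBINT s:{t<..}. r s)"
      unfolding M_def un .
    moreover have "(LBINT s:{t<..}. r s) \<ge> 0"
      unfolding set_lebesgue_integral_def using r_nonneg t
      by (intro Bochner_Integration.integral_nonneg) (auto simp: indicator_def)
    moreover have "(LBINT s:{0..t}. r s) = U t"
      unfolding U_def by (rule set_borel_integral_eq_integral(2)[OF i1])
    ultimately show ?thesis by simp
  qed
  have z: "((\<lambda>t. lam t * M) \<longlongrightarrow> 0 * M) at_top" by (intro tendsto_intros lam_to_0)
  have "((\<lambda>t. lam t * U t) \<longlongrightarrow> 0) at_top"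
  proof (rule tendsto_sandwich[of "\<lambda>_. 0" _ _ "\<lambda>t. lam t * M"])
    show "eventually (\<lambda>t. 0 \<le> lam t * U t) at_top"
      using eventually_ge_at_top[of 0]
    proof eventually_elim
      case (elim t)
      have "0 \<le> U t" unfolding U_def
        by (rule integral_nonneg) (use r_nonneg cont_sub[OF r_cont] in \<open>auto intro: integrable_continuous_real\<close>)
      thus ?case using lam_pos[of t] elim by simp
    qed
    show "eventually (\<lambda>t. lam t * U t \<le> lam t * M) at_top"
      using eventually_ge_at_top[of 0]
    proof eventually_elim
      case (elim t) thus ?case using Ule[OF elim] lam_pos[of t] by (intro mult_left_mono) auto
    qed
  qed (use z in auto)
  moreover have "((\<lambda>t. lam t * U t) \<longlongrightarrow> cst / \<alpha>) at_top" using U_lim unfolding U_def .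
  ultimately have "cst / \<alpha> = 0" by (intro tendsto_unique[of at_top "\<lambda>t. lam t * U t"]) simp_all
  thus False using cst_pos alpha by simp
qed

end

theorem theorem3p1:
  fixes k r L :: "real \<Rightarrow> real" and \<alpha> a :: real
  assumes C1_int: "set_integrable lborel {0..} k"
    and C1_cont: "continuous_on {0..} k"
    and C1_pos: "\<And>t. t \<ge> 0 \<Longrightarrow> k t > 0"
    and C2: "convex_on {0..} (\<lambda>t. ln (tail_int k t))"
    and alpha: "0 < \<alpha>" "\<alpha> < 1"
    and L_sv: "slowly_varying L"
    and C3: "\<And>t. t > 0 \<Longrightarrow> tail_int k t = L t * t powr (- \<alpha>)"
    and a_def: "a = - (LBINT s:{0..}. k s)"
    and r0: "r 0 = 1"
    and r_eq: "\<And>t. t \<ge> 0 \<Longrightarrow>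
       (r has_real_derivative (a * r t + (LBINT s:{0..t}. k (t - s) * r s))) (at t within {0..})"
  shows "((\<lambda>t. r t * t powr (1 - \<alpha>) * L t) \<longlongrightarrow> sin (\<alpha> * pi) / pi) at_top \<and>
    (\<alpha> < 1/2 \<longrightarrow> set_integrable lborel {0..} (\<lambda>t. (r t)\<^sup>2) \<and> \<not> set_integrable lborel {0..} r)"
proof -
  interpret setting k r L \<alpha> a
    by (rule setting.intro[OF C1_int C1_cont C1_pos C2 alpha(1) alpha(2) L_sv C3 a_def r0 r_eq])
  show ?thesis using main_lim L2 notL1 by blast
qed

end
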